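(* There are two computable trees $P,Q\subseteq2^{<\omega}$ such that $[P]$ and $[Q]$ have the same order type (under the lexicographic order) but there is no computable order isomorphism $h^*:[P]\to[Q]$.
   Context: A tree is a subset of $2^{<\omega}$ closed under initial segments; it is computable if it is a computable set under a standard coding of strings by natural numbers. $[T]$ is the set of infinite binary sequences all of whose finite initial segments lie in $T$, ordered by $X<Y$ iff $X\ne Y$ and $X(n)<Y(n)$ at the first $n$ where they differ. A map $h^*:[P]\to[Q]$ is computable if there is an oracle Turing machine which, given oracle $X\in[P]$, computes $h^*(X)$. *)

theory Defs
  imports Main
begin

datatype recf =
    Zero
  | Succ
  | Proj nat
  | Comp recf "recf list"
  | Prec recf recf
  | Mn recf
  | Orc

inductive reval :: "(nat \<Rightarrow> bool) \<Rightarrow> recf \<Rightarrow> nat list \<Rightarrow> nat \<Rightarrow> bool" where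
  zero: "reval A Zero xs 0"
| succ: "reval A Succ (x # xs) (Suc x)"
| proj: "i < length xs \<Longrightarrow> reval A (Proj i) xs (xs ! i)"
| comp: "list_all2 (\<lambda>g y. reval A g xs y) gs ys \<Longrightarrow> reval A f ys z \<Longrightarrow> reval A (Comp f gs) xs z"
| prec0: "reval A f xs y \<Longrightarrow> reval A (Prec f g) (0 # xs) y"
| precS: "reval A (Prec f g) (n # xs) r \<Longrightarrow> reval A g (n # r # xs) y
          \<Longrightarrow> reval A (Prec f g) (Suc n # xs) y"
| mn: "reval A f (n # xs) 0 \<Longrightarrow> (\<forall>m<n. \<exists>v. v \<noteq> 0 \<and> reval A f (m # xs) v)
          \<Longrightarrow> reval A (Mn f) xs n"
| orc: "reval A Orc (x # xs) (if A x then 1 else 0)"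

text \<open>A set of naturals is computable if its characteristic function is (total) recursive
  (the oracle is the constant-false one, i.e. not used).\<close>
definition computable_set :: "nat set \<Rightarrow> bool" where
  "computable_set S \<longleftrightarrow> (\<exists>e. \<forall>n. reval (\<lambda>_. False) e [n] (if n \<in> S then 1 else 0))"

text \<open>Binary strings are bool lists (False = 0, True = 1). Standard (bijective) coding by naturals.\<close>
fun str_code :: "bool list \<Rightarrow> nat" where
  "str_code [] = 0"
| "str_code (b # s) = 2 * str_code s + (if b then 2 else 1)"

definition is_tree :: "bool list set \<Rightarrow> bool" where
  "is_tree T \<longleftrightarrow> (\<forall>s t. s @ t \<in> T \<longrightarrow> s \<in> T)"

definition computable_tree :: "bool list set \<Rightarrow> bool" where
  "computable_tree T \<longleftrightarrow> computable_set (str_code ` T)"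

definition paths :: "bool list set \<Rightarrow> (nat \<Rightarrow> bool) set" where
  "paths T = {X. \<forall>n. map X [0..<n] \<in> T}"

definition lex_less :: "(nat \<Rightarrow> bool) \<Rightarrow> (nat \<Rightarrow> bool) \<Rightarrow> bool" where
  "lex_less X Y \<longleftrightarrow> X \<noteq> Y \<and> (let n = (LEAST n. X n \<noteq> Y n) in \<not> X n \<and> Y n)"

definition order_iso_on :: "(nat \<Rightarrow> bool) set \<Rightarrow> (nat \<Rightarrow> bool) set
    \<Rightarrow> ((nat \<Rightarrow> bool) \<Rightarrow> (nat \<Rightarrow> bool)) \<Rightarrow> bool" where
  "order_iso_on A B h \<longleftrightarrow> bij_betw h A B \<and>
     (\<forall>X\<in>A. \<forall>Y\<in>A. lex_less X Y \<longleftrightarrow> lex_less (h X) (h Y))"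

definition computable_map_on :: "(nat \<Rightarrow> bool) set \<Rightarrow> ((nat \<Rightarrow> bool) \<Rightarrow> (nat \<Rightarrow> bool)) \<Rightarrow> bool" where
  "computable_map_on A h \<longleftrightarrow>
     (\<exists>e. \<forall>X\<in>A. \<forall>n. reval X e [n] (if h X n then 1 else 0))"

end

theory Submission
  imports Defs
begin


definition rc :: "nat \<Rightarrow> (nat list \<Rightarrow> nat) \<Rightarrow> bool" where
  "rc n f \<longleftrightarrow> (\<exists>e. \<forall>xs. length xs = n \<longrightarrow> reval (\<lambda>_. False) e xs (f xs))"

definition rcp :: "nat \<Rightarrow> (nat list \<Rightarrow> bool) \<Rightarrow> bool" where
  "rcp n P \<longleftrightarrow> rc n (\<lambda>xs. if P xs then 1 else 0)"

lemma rc_cong: "rc n f \<Longrightarrow> (\<And>xs. length xs = n \<Longrightarrow> f xs = g xs) \<Longrightarrow> rc n g"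
  unfolding rc_def by metis

fun cprog :: "nat \<Rightarrow> recf" where
  "cprog 0 = Zero"
| "cprog (Suc c) = Comp Succ [cprog c]"

lemma reval_cprog: "reval A (cprog c) xs c"
proof (induction c)
  case 0 then show ?case by (simp add: reval.zero)
next
  case (Suc c)
  have "list_all2 (\<lambda>g y. reval A g xs y) [cprog c] [c]" using Suc by simp
  moreover have "reval A Succ [c] (Suc c)" by (rule reval.succ)
  ultimately show ?case using reval.comp[of A xs "[cprog c]" "[c]" Succ "Suc c"] by simp
qed

lemma rc_const[intro]: "rc n (\<lambda>xs. c)"
  unfolding rc_def using reval_cprog by blast

lemma rc_nth[intro]: "i < n \<Longrightarrow> rc n (\<lambda>xs. xs ! i)"
  unfolding rc_def by (metis reval.proj)

lemma rc_comp_list: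
  assumes "rc m f" "length gs = m" "\<forall>g\<in>set gs. rc n g"
  shows "rc n (\<lambda>xs. f (map (\<lambda>g. g xs) gs))"
proof -
  obtain ef where ef: "\<forall>ys. length ys = m \<longrightarrow> reval (\<lambda>_. False) ef ys (f ys)"
    using assms(1) unfolding rc_def by blast
  have "\<exists>es. list_all2 (\<lambda>e g. \<forall>xs. length xs = n \<longrightarrow> reval (\<lambda>_. False) e xs (g xs)) es gs"
    using assms(3)
  proof (induction gs)
    case Nil then show ?case by auto
  next
    case (Cons g gs)
    then obtain es where "list_all2 (\<lambda>e g. \<forall>xs. length xs = n \<longrightarrow> reval (\<lambda>_. False) e xs (g xs)) es gs"
      by auto
    moreover obtain e where "\<forall>xs. length xs = n \<longrightarrow> reval (\<lambda>_. False) e xs (g xs)"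
      using Cons.prems unfolding rc_def by auto
    ultimately show ?case by (intro exI[of _ "e # es"]) auto
  qed
  then obtain es where es: "list_all2 (\<lambda>e g. \<forall>xs. length xs = n \<longrightarrow> reval (\<lambda>_. False) e xs (g xs)) es gs"
    by blast
  show ?thesis unfolding rc_def
  proof (intro exI allI impI)
    fix xs :: "nat list" assume len: "length xs = n"
    have "list_all2 (\<lambda>e y. reval (\<lambda>_. False) e xs y) es (map (\<lambda>g. g xs) gs)"
      using es len by (auto simp: list_all2_conv_all_nth)
    moreover have "reval (\<lambda>_. False) ef (map (\<lambda>g. g xs) gs) (f (map (\<lambda>g. g xs) gs))"
      using ef assms(2) by simp
    ultimately show "reval (\<lambda>_. False) (Comp ef es) xs (f (map (\<lambda>g. g xs) gs))"
      by (rule reval.comp)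
  qed
qed

lemma rc_comp1: "rc 1 h \<Longrightarrow> rc n f \<Longrightarrow> rc n (\<lambda>xs. h [f xs])"
  using rc_comp_list[of 1 h "[f]" n] by simp

lemma rc_comp2: "rc 2 h \<Longrightarrow> rc n f \<Longrightarrow> rc n g \<Longrightarrow> rc n (\<lambda>xs. h [f xs, g xs])"
  using rc_comp_list[of 2 h "[f, g]" n] by simp

lemma rc_comp3: "rc 3 h \<Longrightarrow> rc n f \<Longrightarrow> rc n g \<Longrightarrow> rc n k \<Longrightarrow> rc n (\<lambda>xs. h [f xs, g xs, k xs])"
  using rc_comp_list[of 3 h "[f, g, k]" n] by (simp add: numeral_3_eq_3)

lemma rc_Suc0: "rc 1 (\<lambda>xs. Suc (xs ! 0))"
  unfolding rc_def
proof (intro exI allI impI)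
  fix xs :: "nat list" assume "length xs = 1"
  then obtain x where "xs = [x]" by (cases xs) auto
  then show "reval (\<lambda>_. False) Succ xs (Suc (xs ! 0))" by (simp add: reval.succ)
qed

lemma rc_Suc[intro]: "rc n f \<Longrightarrow> rc n (\<lambda>xs. Suc (f xs))"
  using rc_comp1[OF rc_Suc0] by simp

lemma rc_shift: "rc n f \<Longrightarrow> rc (m + n) (\<lambda>ys. f (drop m ys))"
proof -
  assume f: "rc n f"
  have "rc (m + n) (\<lambda>ys. f (map (\<lambda>g. g ys) (map (\<lambda>i ys. ys ! (m + i)) [0..<n])))"
    by (rule rc_comp_list[OF f]) auto
  moreover have "map (\<lambda>i. xs ! (m + i)) [0..<n] = drop m xs" if "length xs = m + n" for xs :: "nat list"
    by (rule nth_equalityI) (use that in auto)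
  ultimately show ?thesis
    by (elim rc_cong) (simp add: comp_def)
qed

lemma rc_prec_base:
  assumes "rc n f" "rc (Suc (Suc n)) g"
  shows "rc (Suc n) (\<lambda>ys. rec_nat (f (tl ys)) (\<lambda>i r. g (i # r # tl ys)) (hd ys))"
proof -
  obtain ef where ef: "\<forall>ys. length ys = n \<longrightarrow> reval (\<lambda>_. False) ef ys (f ys)"
    using assms(1) unfolding rc_def by blast
  obtain eg where eg: "\<forall>ys. length ys = Suc (Suc n) \<longrightarrow> reval (\<lambda>_. False) eg ys (g ys)"
    using assms(2) unfolding rc_def by blast
  have *: "reval (\<lambda>_. False) (Prec ef eg) (m # xs) (rec_nat (f xs) (\<lambda>i r. g (i # r # xs)) m)"
    if "length xs = n" for m xs
  proof (induction m)
    case 0 then show ?case using ef that by (simp add: reval.prec0)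
  next
    case (Suc m) then show ?case using eg that by (auto intro: reval.precS)
  qed
  show ?thesis unfolding rc_def
  proof (intro exI allI impI)
    fix ys :: "nat list" assume "length ys = Suc n"
    then obtain m xs where "ys = m # xs" "length xs = n" by (cases ys) auto
    then show "reval (\<lambda>_. False) (Prec ef eg) ys (rec_nat (f (tl ys)) (\<lambda>i r. g (i # r # tl ys)) (hd ys))"
      using * by simp
  qed
qed

lemma rc_rec:
  assumes c: "rc n c" and b: "rc n b" and s: "rc (Suc (Suc n)) s"
  shows "rc n (\<lambda>xs. rec_nat (b xs) (\<lambda>i r. s (i # r # xs)) (c xs))"
proof -
  have base: "rc (Suc n) (\<lambda>ys. rec_nat (b (tl ys)) (\<lambda>i r. s (i # r # tl ys)) (hd ys))"
    by (rule rc_prec_base[OF b s])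
  have "rc n (\<lambda>xs. (\<lambda>ys. rec_nat (b (tl ys)) (\<lambda>i r. s (i # r # tl ys)) (hd ys))
          (map (\<lambda>g. g xs) (c # map (\<lambda>i xs. xs ! i) [0..<n])))"
    by (rule rc_comp_list[OF base]) (auto simp: c)
  moreover have "map ((!) xs) [0..<n] = xs" if "length xs = n" for xs :: "nat list"
    using map_nth[of xs] that by simp
  ultimately show ?thesis
    by (elim rc_cong) (simp add: comp_def)
qed

lemma rc_mn:
  assumes f: "rc (Suc n) f" and ex: "\<And>xs. length xs = n \<Longrightarrow> \<exists>m. f (m # xs) = 0"
  shows "rc n (\<lambda>xs. LEAST m. f (m # xs) = 0)"
proof -
  obtain ef where ef: "\<forall>ys. length ys = Suc n \<longrightarrow> reval (\<lambda>_. False) ef ys (f ys)"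
    using f unfolding rc_def by blast
  show ?thesis unfolding rc_def
  proof (intro exI allI impI)
    fix xs :: "nat list" assume len: "length xs = n"
    let ?m = "LEAST m. f (m # xs) = 0"
    have z: "f (?m # xs) = 0" using ex[OF len] by (rule LeastI_ex)
    have "\<forall>m<?m. \<exists>v. v \<noteq> 0 \<and> reval (\<lambda>_. False) ef (m # xs) v"
      using not_less_Least[of _ "\<lambda>m. f (m # xs) = 0"] ef len by force
    then show "reval (\<lambda>_. False) (Mn ef) xs ?m"
      using ef len z by (metis reval.mn length_Cons)
  qed
qed


lemma rc_lift2: "rc 2 h \<Longrightarrow> (\<And>xs. length xs = 2 \<Longrightarrow> h xs = op (xs!0) (xs!1)) \<Longrightarrow>
   rc n f \<Longrightarrow> rc n g \<Longrightarrow> rc n (\<lambda>xs. op (f xs) (g xs))"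
  by (drule (2) rc_comp2) (erule rc_cong, simp)

lemma rc_lift1: "rc 1 h \<Longrightarrow> (\<And>xs. length xs = 1 \<Longrightarrow> h xs = op (xs!0)) \<Longrightarrow>
   rc n f \<Longrightarrow> rc n (\<lambda>xs. op (f xs))"
  by (drule (1) rc_comp1) (erule rc_cong, simp)

lemma rc_hd[intro]: "0 < n \<Longrightarrow> rc n (\<lambda>ys. hd ys)"
  by (rule rc_cong[OF rc_nth[of 0 n]]) (auto simp: hd_conv_nth)
lemma rc_tl_nth[intro]: "Suc i < n \<Longrightarrow> rc n (\<lambda>ys. tl ys ! i)"
  by (rule rc_cong[OF rc_nth[of "Suc i" n]]) (auto simp: nth_tl)
lemma rc_hd_tl[intro]: "Suc 0 < n \<Longrightarrow> rc n (\<lambda>ys. hd (tl ys))"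
  apply (rule rc_cong[OF rc_nth[of "Suc 0" n]]) apply simp
  subgoal for xs by (cases xs; cases "tl xs") auto
  done
lemma rc_tl_tl_nth[intro]: "Suc (Suc i) < n \<Longrightarrow> rc n (\<lambda>ys. tl (tl ys) ! i)"
  by (rule rc_cong[OF rc_nth[of "Suc (Suc i)" n]]) (auto simp: nth_tl)

lemma rec_add: "rec_nat a (\<lambda>i r. Suc r) b = a + (b::nat)" by (induction b) auto
lemma rc_add[intro]: "rc n f \<Longrightarrow> rc n g \<Longrightarrow> rc n (\<lambda>xs. f xs + g xs)"
proof (rule rc_lift2[where op="(+)"])
  show "rc 2 (\<lambda>xs. rec_nat (xs!0) (\<lambda>i r. (\<lambda>ys. Suc (ys!1)) (i # r # xs)) (xs!1))"
    by (rule rc_rec) (auto intro!: rc_Suc rc_nth)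
qed (simp add: rec_add)

lemma rec_mult: "rec_nat 0 (\<lambda>i r. r + a) b = a * (b::nat)" by (induction b) auto
lemma rc_mult[intro]: "rc n f \<Longrightarrow> rc n g \<Longrightarrow> rc n (\<lambda>xs. f xs * g xs)"
proof (rule rc_lift2[where op="(*)"])
  show "rc 2 (\<lambda>xs. rec_nat 0 (\<lambda>i r. (\<lambda>ys. ys!1 + ys!2) (i # r # xs)) (xs!1))"
    by (rule rc_rec) (auto intro!: rc_Suc rc_nth rc_add)
qed (simp add: rec_mult)

lemma rec_pred: "rec_nat 0 (\<lambda>i r. i) a = a - (1::nat)" by (induction a) auto
lemma rc_pred: "rc n f \<Longrightarrow> rc n (\<lambda>xs. f xs - 1)"
proof (rule rc_lift1[where op="\<lambda>x. x - 1"])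
  show "rc 1 (\<lambda>xs. rec_nat 0 (\<lambda>i r. (\<lambda>ys. ys!0) (i # r # xs)) (xs!0))"
    by (rule rc_rec) (auto intro!: rc_Suc rc_nth rc_add)
qed (simp add: rec_pred)

lemma rec_sub: "rec_nat a (\<lambda>i r. r - Suc 0) b = a - (b::nat)" by (induction b) auto
lemma rc_sub[intro]: "rc n f \<Longrightarrow> rc n g \<Longrightarrow> rc n (\<lambda>xs. f xs - g xs)"
proof (rule rc_lift2[where op="(-)"])
  show "rc 2 (\<lambda>xs. rec_nat (xs!0) (\<lambda>i r. (\<lambda>ys. ys!1 - 1) (i # r # xs)) (xs!1))"
    apply (rule rc_rec) apply (rule rc_nth, simp) apply (rule rc_nth, simp)
    apply (rule rc_pred) apply (rule rc_nth) apply simp done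
qed (simp add: rec_sub)

lemma rc_ifz: "rc n c \<Longrightarrow> rc n a \<Longrightarrow> rc n b \<Longrightarrow> rc n (\<lambda>xs. if c xs = 0 then a xs else b xs)"
proof -
  assume c: "rc n c" and a: "rc n a" and b: "rc n b"
  have "rc n (\<lambda>xs. rec_nat (a xs) (\<lambda>i r. (\<lambda>ys. b (drop 2 ys)) (i # r # xs)) (c xs))"
    by (rule rc_rec[OF c a]) (use rc_shift[OF b, of 2] in simp)
  then show ?thesis
    apply (rule rc_cong)
    subgoal for xs by (cases "c xs") auto
    done
qed

lemma rc_if[intro]: "rcp n P \<Longrightarrow> rc n a \<Longrightarrow> rc n b \<Longrightarrow> rc n (\<lambda>xs. if P xs then a xs else b xs)"
  unfolding rcp_def by (drule (2) rc_ifz) (erule rc_cong; simp)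

lemma rcp_eq[intro]: "rc n f \<Longrightarrow> rc n g \<Longrightarrow> rcp n (\<lambda>xs. f xs = g xs)"
  unfolding rcp_def
  by (rule rc_cong[OF rc_ifz[where c="\<lambda>xs. (f xs - g xs) + (g xs - f xs)" and a="\<lambda>_. 1" and b="\<lambda>_. 0"]]) auto

lemma rcp_less[intro]: "rc n f \<Longrightarrow> rc n g \<Longrightarrow> rcp n (\<lambda>xs. f xs < g xs)"
  unfolding rcp_def
  by (rule rc_cong[OF rc_ifz[where c="\<lambda>xs. g xs - f xs" and a="\<lambda>_. 0" and b="\<lambda>_. 1"]]) auto

lemma rcp_le[intro]: "rc n f \<Longrightarrow> rc n g \<Longrightarrow> rcp n (\<lambda>xs. f xs \<le> g xs)"
  unfolding rcp_def
  by (rule rc_cong[OF rc_ifz[where c="\<lambda>xs. f xs - g xs" and a="\<lambda>_. 1" and b="\<lambda>_. 0"]]) auto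

lemma rcp_not[intro]: "rcp n P \<Longrightarrow> rcp n (\<lambda>xs. \<not> P xs)"
  unfolding rcp_def
  by (rule rc_cong[OF rc_ifz[where c="\<lambda>xs. if P xs then 1 else 0" and a="\<lambda>_. 1" and b="\<lambda>_. 0"]]) auto

lemma rcp_conj[intro]: "rcp n P \<Longrightarrow> rcp n Q \<Longrightarrow> rcp n (\<lambda>xs. P xs \<and> Q xs)"
  unfolding rcp_def
  by (rule rc_cong[OF rc_mult[of n "\<lambda>xs. if P xs then 1 else 0" "\<lambda>xs. if Q xs then 1 else 0"]]) auto

lemma rcp_disj[intro]: "rcp n P \<Longrightarrow> rcp n Q \<Longrightarrow> rcp n (\<lambda>xs. P xs \<or> Q xs)"
proof -
  assume "rcp n P" "rcp n Q"
  then have "rcp n (\<lambda>xs. \<not> (\<not> P xs \<and> \<not> Q xs))" by (intro rcp_not rcp_conj)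
  then show ?thesis by simp
qed

lemma rcp_imp[intro]: "rcp n P \<Longrightarrow> rcp n Q \<Longrightarrow> rcp n (\<lambda>xs. P xs \<longrightarrow> Q xs)"
proof -
  assume "rcp n P" "rcp n Q"
  then have "rcp n (\<lambda>xs. \<not> P xs \<or> Q xs)" by (intro rcp_not rcp_disj)
  then show ?thesis by simp
qed

lemma rcp_const[intro]: "rcp n (\<lambda>xs. b)"
  unfolding rcp_def by (cases b) auto

lemma rc_hd_drop2: "rc (Suc n) f \<Longrightarrow> rc (Suc (Suc n)) (\<lambda>ys. f (hd ys # drop 2 ys))"
proof -
  assume f: "rc (Suc n) f"
  have "rc (Suc (Suc n)) (\<lambda>ys. f (map (\<lambda>g. g ys) ((\<lambda>ys. ys ! 0) # map (\<lambda>i ys. ys ! (i + 2)) [0..<n])))"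
    by (rule rc_comp_list[OF f]) auto
  moreover have "(ys ! 0) # map (\<lambda>i. ys ! (i + 2)) [0..<n] = hd ys # drop 2 ys"
    if "length ys = Suc (Suc n)" for ys :: "nat list"
    using that by (cases ys; cases "tl ys") (auto intro!: nth_equalityI)
  ultimately show ?thesis by (elim rc_cong) (simp add: comp_def)
qed

lemma rc_sum:
  assumes f: "rc (Suc n) (\<lambda>ys. f (hd ys) (tl ys))" and c: "rc n c"
  shows "rc n (\<lambda>xs. \<Sum>i<c xs. f i xs)"
proof -
  have s: "rc (Suc (Suc n)) (\<lambda>ys. ys ! 1 + (\<lambda>ys. f (hd ys) (tl ys)) (hd ys # drop 2 ys))"
    by (intro rc_add rc_nth rc_hd_drop2[OF f]) auto
  have "rc n (\<lambda>xs. rec_nat 0 (\<lambda>i r. (\<lambda>ys. ys ! 1 + (\<lambda>ys. f (hd ys) (tl ys)) (hd ys # drop 2 ys)) (i # r # xs)) (c xs))"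
    by (rule rc_rec[OF c rc_const s])
  moreover have "rec_nat 0 (\<lambda>i r. r + f i xs) m = (\<Sum>i<m. f i xs)" for m xs
    by (induction m) auto
  ultimately show ?thesis by (elim rc_cong) simp
qed

lemma rcp_bex:
  assumes P: "rcp (Suc n) (\<lambda>ys. P (hd ys) (tl ys))" and c: "rc n c"
  shows "rcp n (\<lambda>xs. \<exists>i<c xs. P i xs)"
proof -
  have "rc n (\<lambda>xs. \<Sum>i<c xs. if P i xs then 1 else (0::nat))"
    using rc_sum[OF P[unfolded rcp_def] c] by simp
  note s = this
  have "rc n (\<lambda>xs. if (\<Sum>i<c xs. if P i xs then 1 else (0::nat)) = 0 then 0 else 1)"
    by (rule rc_ifz) (rule s, rule rc_const, rule rc_const)
  then show ?thesis unfolding rcp_def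
    by (rule rc_cong) (auto simp: sum_eq_0_iff)
qed

lemma rcp_ball:
  assumes P: "rcp (Suc n) (\<lambda>ys. P (hd ys) (tl ys))" and c: "rc n c"
  shows "rcp n (\<lambda>xs. \<forall>i<c xs. P i xs)"
proof -
  have nP: "rcp (Suc n) (\<lambda>ys. \<not> P (hd ys) (tl ys))" by (rule rcp_not[OF P])
  have "rcp n (\<lambda>xs. \<not> (\<exists>i<c xs. \<not> P i xs))" by (rule rcp_not, rule rcp_bex[OF nP c])
  then show ?thesis by simp
qed

lemma rc_least:
  assumes P: "rcp (Suc n) (\<lambda>ys. P (hd ys) (tl ys))" and ex: "\<And>xs. length xs = n \<Longrightarrow> \<exists>m. P m xs"
  shows "rc n (\<lambda>xs. LEAST m. P m xs)"
proof -
  have f: "rc (Suc n) (\<lambda>ys. if P (hd ys) (tl ys) then 0 else 1)"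
    by (rule rc_if[OF P rc_const rc_const])
  have "rc n (\<lambda>xs. LEAST m. (if P (hd (m # xs)) (tl (m # xs)) then 0 else 1) = (0::nat))"
    by (rule rc_mn[OF f]) (use ex in auto)
  moreover have "(\<lambda>m. (if P m xs then 0 else 1::nat) = 0) = (\<lambda>m. P m xs)" for xs by auto
  ultimately show ?thesis by simp
qed


fun tri :: "nat \<Rightarrow> nat" where
  "tri 0 = 0"
| "tri (Suc n) = tri n + Suc n"

definition pr :: "nat \<Rightarrow> nat \<Rightarrow> nat" where "pr x y = tri (x + y) + x"
definition unt :: "nat \<Rightarrow> nat" where "unt z = (LEAST t. z < tri (Suc t))"
definition pfst :: "nat \<Rightarrow> nat" where "pfst z = z - tri (unt z)"
definition psnd :: "nat \<Rightarrow> nat" where "psnd z = unt z - pfst z"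

lemma tri_mono: "m \<le> n \<Longrightarrow> tri m \<le> tri n"
  by (induction n) (auto simp: le_Suc_eq)

lemma tri_ge: "n \<le> tri n"
  by (induction n) auto

lemma unt_pr: "unt (pr x y) = x + y"
  unfolding unt_def pr_def
proof (rule Least_equality)
  show "tri (x + y) + x < tri (Suc (x + y))" by simp
next
  fix t assume "tri (x + y) + x < tri (Suc t)"
  then show "x + y \<le> t"
    using tri_mono[of "Suc t" "x + y"] by (cases "x + y \<le> t") auto
qed

lemma pfst_pr[simp]: "pfst (pr x y) = x"
  unfolding pfst_def using unt_pr by (simp add: pr_def)

lemma psnd_pr[simp]: "psnd (pr x y) = y"
  unfolding psnd_def using unt_pr by simp

lemma pr_inj[simp]: "pr a b = pr c d \<longleftrightarrow> a = c \<and> b = d"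
  by (metis pfst_pr psnd_pr)

lemma pr_00[simp]: "pr 0 0 = 0" by (simp add: pr_def)
lemma pfst_0[simp]: "pfst 0 = 0" using pfst_pr[of 0 0] by simp
lemma psnd_0[simp]: "psnd 0 = 0" using psnd_pr[of 0 0] by simp

lemma pr_ge2: "y \<le> pr x y" unfolding pr_def using tri_ge[of "x+y"] by simp
lemma pr_ge1: "x \<le> pr x y" unfolding pr_def by simp

lemma rec_tri: "rec_nat 0 (\<lambda>i r. Suc (r + i)) n = tri n" by (induction n) auto

lemma rc_tri[intro]: "rc n f \<Longrightarrow> rc n (\<lambda>xs. tri (f xs))"
proof (rule rc_lift1[where op=tri])
  show "rc 1 (\<lambda>xs. rec_nat 0 (\<lambda>i r. (\<lambda>ys. ys ! 1 + Suc (ys ! 0)) (i # r # xs)) (xs ! 0))"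
    by (rule rc_rec) (auto intro!: rc_add rc_Suc rc_nth)
qed (simp add: rec_tri)

lemma rc_unt[intro]: "rc n f \<Longrightarrow> rc n (\<lambda>xs. unt (f xs))"
proof (rule rc_lift1[where op=unt])
  show "rc 1 (\<lambda>xs. LEAST t. (\<lambda>t xs. xs ! 0 < tri (Suc t)) t xs)"
  proof (rule rc_least)
    show "rcp (Suc 1) (\<lambda>ys. tl ys ! 0 < tri (Suc (hd ys)))"
      by (intro rcp_less rc_tri rc_Suc rc_hd rc_tl_nth) auto
    fix xs :: "nat list"
    show "\<exists>m. xs ! 0 < tri (Suc m)" using tri_ge[of "Suc (xs!0)"] by (intro exI[of _ "xs!0"]) simp
  qed
qed (simp add: unt_def)

lemma rc_pr[intro]: "rc n f \<Longrightarrow> rc n g \<Longrightarrow> rc n (\<lambda>xs. pr (f xs) (g xs))"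
  unfolding pr_def by (intro rc_add rc_tri)

lemma rc_pfst[intro]: "rc n f \<Longrightarrow> rc n (\<lambda>xs. pfst (f xs))"
  unfolding pfst_def by (intro rc_sub rc_tri rc_unt)

lemma rc_psnd[intro]: "rc n f \<Longrightarrow> rc n (\<lambda>xs. psnd (f xs))"
  unfolding psnd_def pfst_def by (intro rc_sub rc_tri rc_unt)

definition consc :: "nat \<Rightarrow> nat \<Rightarrow> nat" where "consc x l = Suc (pr x l)"
definition hdc :: "nat \<Rightarrow> nat" where "hdc l = pfst (l - 1)"
definition tlc :: "nat \<Rightarrow> nat" where "tlc l = psnd (l - 1)"
definition dropc :: "nat \<Rightarrow> nat \<Rightarrow> nat" where "dropc i l = rec_nat l (\<lambda>_ r. tlc r) i"

fun encL :: "nat list \<Rightarrow> nat" where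
  "encL [] = 0"
| "encL (x # xs) = consc x (encL xs)"

lemma hdc_cons[simp]: "hdc (consc x l) = x" by (simp add: hdc_def consc_def)
lemma tlc_cons[simp]: "tlc (consc x l) = l" by (simp add: tlc_def consc_def)
lemma consc_ne0[simp]: "consc x l \<noteq> 0" by (simp add: consc_def)
lemma tlc_0[simp]: "tlc 0 = 0" by (simp add: tlc_def)
lemma encL_0[simp]: "encL xs = 0 \<longleftrightarrow> xs = []" by (cases xs) auto
lemma dropc_0[simp]: "dropc 0 l = l" by (simp add: dropc_def)
lemma dropc_Suc: "dropc (Suc i) l = tlc (dropc i l)" by (simp add: dropc_def)

lemma dropc_encL[simp]: "dropc i (encL xs) = encL (drop i xs)"
proof (induction i arbitrary: xs)
  case 0 then show ?case by simp
next
  case (Suc i)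
  have "drop (Suc i) xs = drop 1 (drop i xs)" by simp
  then show ?case using Suc by (cases "drop i xs") (auto simp: dropc_Suc)
qed

lemma hdc_drop: "i < length xs \<Longrightarrow> hdc (encL (drop i xs)) = xs ! i"
  by (simp add: Cons_nth_drop_Suc[symmetric])

lemma rc_consc[intro]: "rc n f \<Longrightarrow> rc n g \<Longrightarrow> rc n (\<lambda>xs. consc (f xs) (g xs))"
  unfolding consc_def by (intro rc_Suc rc_pr)
lemma rc_hdc[intro]: "rc n f \<Longrightarrow> rc n (\<lambda>xs. hdc (f xs))"
  unfolding hdc_def by (intro rc_pfst rc_sub rc_const)
lemma rc_tlc[intro]: "rc n f \<Longrightarrow> rc n (\<lambda>xs. tlc (f xs))"
  unfolding tlc_def by (intro rc_psnd rc_sub rc_const)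
lemma rc_dropc[intro]: "rc n f \<Longrightarrow> rc n g \<Longrightarrow> rc n (\<lambda>xs. dropc (f xs) (g xs))"
proof (rule rc_lift2[where op=dropc])
  show "rc 2 (\<lambda>xs. rec_nat (xs!1) (\<lambda>i r. (\<lambda>ys. tlc (ys!1)) (i # r # xs)) (xs!0))"
    by (rule rc_rec) (auto intro!: rc_tlc rc_nth)
qed (simp add: dropc_def)


datatype mode = Ev recf "nat list" | Evs "recf list" "nat list" | Rt nat | Rtl "nat list"
datatype frame = KC recf | K1 "recf list" "nat list" | K2 nat | KP recf nat "nat list" | KM recf nat "nat list"

fun step :: "mode \<times> frame list \<Rightarrow> mode \<times> frame list" where
  "step (Ev Zero xs, st) = (Rt 0, st)"
| "step (Ev Succ (x#xs), st) = (Rt (Suc x), st)"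
| "step (Ev (Proj i) xs, st) = (if i < length xs then (Rt (xs!i), st) else (Ev (Proj i) xs, st))"
| "step (Ev (Comp f gs) xs, st) = (Evs gs xs, KC f # st)"
| "step (Ev (Prec f g) (0#xs), st) = (Ev f xs, st)"
| "step (Ev (Prec f g) (Suc n#xs), st) = (Ev (Prec f g) (n#xs), KP g n xs # st)"
| "step (Ev (Mn f) xs, st) = (Ev f (0#xs), KM f 0 xs # st)"
| "step (Ev Orc (x#xs), st) = (Rt 0, st)"
| "step (Evs [] xs, st) = (Rtl [], st)"
| "step (Evs (g#gs) xs, st) = (Ev g xs, K1 gs xs # st)"
| "step (Rt v, K1 gs xs # st) = (Evs gs xs, K2 v # st)"
| "step (Rt v, KP g n xs # st) = (Ev g (n # v # xs), st)"
| "step (Rt v, KM f m xs # st) = (if v = 0 then (Rt m, st) else (Ev f (Suc m # xs), KM f (Suc m) xs # st))"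
| "step (Rtl vs, KC f # st) = (Ev f vs, st)"
| "step (Rtl vs, K2 v # st) = (Rtl (v # vs), st)"
| "step c = c"

definition reach :: "mode \<times> frame list \<Rightarrow> mode \<times> frame list \<Rightarrow> bool" where
  "reach c d \<longleftrightarrow> (\<exists>s. (step ^^ s) c = d)"

lemma reach_refl: "reach c c" unfolding reach_def by (metis funpow_0)
lemma reach_trans: "reach c d \<Longrightarrow> reach d e \<Longrightarrow> reach c e"
  unfolding reach_def by (metis funpow_add comp_apply)
lemma reach_step: "step c = d \<Longrightarrow> reach d e \<Longrightarrow> reach c e"
  unfolding reach_def by (metis funpow_Suc_right comp_apply)

lemma reach_one: "step c = d \<Longrightarrow> reach c d"
  using reach_step reach_refl by blast

lemma reach_list:
  "list_all2 (\<lambda>g y. \<forall>st. reach (Ev g xs, st) (Rt y, st)) gs ys \<Longrightarrow> reach (Evs gs xs, st) (Rtl ys, st)"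
proof (induction gs ys arbitrary: st rule: list_all2_induct)
  case Nil then show ?case by (rule reach_one) simp
next
  case (Cons g gs y ys)
  have h1: "reach (Ev g xs, K1 gs xs # st) (Rt y, K1 gs xs # st)" using Cons(1) by blast
  have h2: "reach (Evs gs xs, K2 y # st) (Rtl ys, K2 y # st)" using Cons(3) by blast
  have s1: "reach (Evs (g#gs) xs, st) (Ev g xs, K1 gs xs # st)" by (rule reach_one) simp
  have s2: "reach (Rt y, K1 gs xs # st) (Evs gs xs, K2 y # st)" by (rule reach_one) simp
  have s3: "reach (Rtl ys, K2 y # st) (Rtl (y#ys), st)" by (rule reach_one) simp
  show ?case by (rule reach_trans[OF s1 reach_trans[OF h1 reach_trans[OF s2 reach_trans[OF h2 s3]]]])
qed

lemma complete:
  "reval A e xs y \<Longrightarrow> A = (\<lambda>_. False) \<Longrightarrow> reach (Ev e xs, st) (Rt y, st)"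
proof (induction arbitrary: st rule: reval.induct)
  case (zero A xs) then show ?case by (intro reach_one) simp
next
  case (succ A x xs) then show ?case by (intro reach_one) simp
next
  case (proj i xs A) then show ?case by (intro reach_one) simp
next
  case (comp A xs gs ys f z)
  have "list_all2 (\<lambda>g y. \<forall>st. reach (Ev g xs, st) (Rt y, st)) gs ys"
    using comp.IH comp.prems by (auto elim: list_all2_mono)
  then have h1: "reach (Evs gs xs, KC f # st) (Rtl ys, KC f # st)" by (rule reach_list)
  have h2: "reach (Ev f ys, st) (Rt z, st)" using comp by blast
  have s1: "reach (Ev (Comp f gs) xs, st) (Evs gs xs, KC f # st)" by (rule reach_one) simp
  have s2: "reach (Rtl ys, KC f # st) (Ev f ys, st)" by (rule reach_one) simp
  show ?case by (rule reach_trans[OF s1 reach_trans[OF h1 reach_trans[OF s2 h2]]])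
next
  case (prec0 A f xs y g)
  have s1: "reach (Ev (Prec f g) (0 # xs), st) (Ev f xs, st)" by (rule reach_one) simp
  show ?case using prec0 by (intro reach_trans[OF s1]) blast
next
  case (precS A f g n xs r y)
  have h1: "reach (Ev (Prec f g) (n # xs), KP g n xs # st) (Rt r, KP g n xs # st)" using precS by blast
  have h2: "reach (Ev g (n # r # xs), st) (Rt y, st)" using precS by blast
  have s1: "reach (Ev (Prec f g) (Suc n # xs), st) (Ev (Prec f g) (n # xs), KP g n xs # st)"
    by (rule reach_one) simp
  have s2: "reach (Rt r, KP g n xs # st) (Ev g (n # r # xs), st)" by (rule reach_one) simp
  show ?case by (rule reach_trans[OF s1 reach_trans[OF h1 reach_trans[OF s2 h2]]])
next
  case (mn A f n xs)
  have *: "m \<le> n \<Longrightarrow> reach (Ev (Mn f) xs, st) (Ev f (m # xs), KM f m xs # st)" for m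
  proof (induction m)
    case 0 then show ?case by (intro reach_one) simp
  next
    case (Suc m)
    then have "m < n" by simp
    then obtain v where v: "v \<noteq> 0" "reach (Ev f (m # xs), KM f m xs # st) (Rt v, KM f m xs # st)"
      using mn.IH(2) mn.prems by blast
    have s: "reach (Rt v, KM f m xs # st) (Ev f (Suc m # xs), KM f (Suc m) xs # st)"
      by (rule reach_one) (simp add: v(1))
    show ?case using Suc.IH \<open>m < n\<close> v(2) s by (meson less_imp_le reach_trans)
  qed
  have h: "reach (Ev f (n # xs), KM f n xs # st) (Rt 0, KM f n xs # st)" using mn by blast
  have s: "reach (Rt 0, KM f n xs # st) (Rt n, st)" by (rule reach_one) simp
  show ?case by (rule reach_trans[OF *[OF order_refl] reach_trans[OF h s]])
next
  case (orc A x xs) then show ?case by (intro reach_one) simp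
qed


fun encR :: "recf \<Rightarrow> nat" where
  "encR Zero = pr 0 0"
| "encR Succ = pr 1 0"
| "encR (Proj i) = pr 2 i"
| "encR (Comp f gs) = pr 3 (pr (encR f) (encL (map encR gs)))"
| "encR (Prec f g) = pr 4 (pr (encR f) (encR g))"
| "encR (Mn f) = pr 5 (encR f)"
| "encR Orc = pr 6 0"

fun encM :: "mode \<Rightarrow> nat" where
  "encM (Ev e xs) = pr 0 (pr (encR e) (encL xs))"
| "encM (Evs gs xs) = pr 1 (pr (encL (map encR gs)) (encL xs))"
| "encM (Rt v) = pr 2 v"
| "encM (Rtl vs) = pr 3 (encL vs)"

fun encF :: "frame \<Rightarrow> nat" where
  "encF (KC f) = pr 0 (encR f)"
| "encF (K1 gs xs) = pr 1 (pr (encL (map encR gs)) (encL xs))"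
| "encF (K2 v) = pr 2 v"
| "encF (KP g n xs) = pr 3 (pr (encR g) (pr n (encL xs)))"
| "encF (KM f m xs) = pr 4 (pr (encR f) (pr m (encL xs)))"

fun encC :: "mode \<times> frame list \<Rightarrow> nat" where
  "encC (m, st) = pr (encM m) (encL (map encF st))"

definition sEv :: "nat \<Rightarrow> nat \<Rightarrow> nat \<Rightarrow> nat \<Rightarrow> nat" where
 "sEv z e xs st = (
  if pfst e = 0 then pr (pr 2 0) st
  else if pfst e = 1 then (if xs = 0 then z else pr (pr 2 (Suc (hdc xs))) st)
  else if pfst e = 2 then (if dropc (psnd e) xs = 0 then z else pr (pr 2 (hdc (dropc (psnd e) xs))) st)
  else if pfst e = 3 then pr (pr 1 (pr (psnd (psnd e)) xs)) (consc (pr 0 (pfst (psnd e))) st)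
  else if pfst e = 4 then (if xs = 0 then z else if hdc xs = 0 then pr (pr 0 (pr (pfst (psnd e)) (tlc xs))) st
      else pr (pr 0 (pr e (consc (hdc xs - 1) (tlc xs))))
              (consc (pr 3 (pr (psnd (psnd e)) (pr (hdc xs - 1) (tlc xs)))) st))
  else if pfst e = 5 then pr (pr 0 (pr (psnd e) (consc 0 xs))) (consc (pr 4 (pr (psnd e) (pr 0 xs))) st)
  else if pfst e = 6 then (if xs = 0 then z else pr (pr 2 0) st)
  else z)"

definition sEvs :: "nat \<Rightarrow> nat \<Rightarrow> nat \<Rightarrow> nat \<Rightarrow> nat" where
 "sEvs z gs xs st = (if gs = 0 then pr (pr 3 0) st
    else pr (pr 0 (pr (hdc gs) xs)) (consc (pr 1 (pr (tlc gs) xs)) st))"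

definition sRt :: "nat \<Rightarrow> nat \<Rightarrow> nat \<Rightarrow> nat" where
 "sRt z v st = (if st = 0 then z else
   if pfst (hdc st) = 1 then pr (pr 1 (psnd (hdc st))) (consc (pr 2 v) (tlc st))
   else if pfst (hdc st) = 3 then
     pr (pr 0 (pr (pfst (psnd (hdc st))) (consc (pfst (psnd (psnd (hdc st)))) (consc v (psnd (psnd (psnd (hdc st)))))))) (tlc st)
   else if pfst (hdc st) = 4 then
     (if v = 0 then pr (pr 2 (pfst (psnd (psnd (hdc st))))) (tlc st)
      else pr (pr 0 (pr (pfst (psnd (hdc st))) (consc (Suc (pfst (psnd (psnd (hdc st))))) (psnd (psnd (psnd (hdc st)))))))
              (consc (pr 4 (pr (pfst (psnd (hdc st))) (pr (Suc (pfst (psnd (psnd (hdc st))))) (psnd (psnd (psnd (hdc st))))))) (tlc st)))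
   else z)"

definition sRtl :: "nat \<Rightarrow> nat \<Rightarrow> nat \<Rightarrow> nat" where
 "sRtl z vs st = (if st = 0 then z else
   if pfst (hdc st) = 0 then pr (pr 0 (pr (psnd (hdc st)) vs)) (tlc st)
   else if pfst (hdc st) = 2 then pr (pr 3 (consc (psnd (hdc st)) vs)) (tlc st)
   else z)"

definition stepN :: "nat \<Rightarrow> nat" where
 "stepN z = (
   if pfst (pfst z) = 0 then sEv z (pfst (psnd (pfst z))) (psnd (psnd (pfst z))) (psnd z)
   else if pfst (pfst z) = 1 then sEvs z (pfst (psnd (pfst z))) (psnd (psnd (pfst z))) (psnd z)
   else if pfst (pfst z) = 2 then sRt z (psnd (pfst z)) (psnd z)
   else if pfst (pfst z) = 3 then sRtl z (psnd (pfst z)) (psnd z)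
   else z)"

lemma stepN_enc: "stepN (encC c) = encC (step c)"
proof (induction c rule: step.induct)
  case (3 i xs st)
  then show ?case
    by (auto simp: stepN_def sEv_def hdc_drop)
next
  case (6 f g n xs st)
  then show ?case by (simp add: stepN_def sEv_def)
qed (simp_all add: stepN_def sEv_def sEvs_def sRt_def sRtl_def)


lemma rc_stepN: "rc 1 (\<lambda>xs. stepN (xs ! 0))"
  unfolding stepN_def sEv_def sEvs_def sRt_def sRtl_def
  by (intro rc_if rcp_eq rc_pr rc_pfst rc_psnd rc_consc rc_hdc rc_tlc rc_dropc rc_Suc rc_sub rc_const rc_nth) simp_all


lemma rc_stepN'[intro]: "rc n f \<Longrightarrow> rc n (\<lambda>xs. stepN (f xs))"
  by (rule rc_lift1[OF rc_stepN]) simp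

definition runN :: "nat \<Rightarrow> nat \<Rightarrow> nat" where "runN s z = (stepN ^^ s) z"
definition initN :: "nat \<Rightarrow> nat" where "initN k = pr (pr 0 (pr k (consc k 0))) 0"
definition haltN :: "nat \<Rightarrow> nat" where "haltN v = pr (pr 2 v) 0"
definition Mh :: "nat \<Rightarrow> nat \<Rightarrow> bool" where "Mh k s \<longleftrightarrow> runN s (initN k) = haltN 0"
definition Dset :: "nat set" where "Dset = {k. \<exists>s. Mh k s}"

lemma rec_run: "rec_nat z (\<lambda>i r. stepN r) s = runN s z"
  by (induction s) (auto simp: runN_def)

lemma rc_runN[intro]: "rc n f \<Longrightarrow> rc n g \<Longrightarrow> rc n (\<lambda>xs. runN (f xs) (g xs))"
proof (rule rc_lift2[where op=runN])
  show "rc 2 (\<lambda>xs. rec_nat (xs!1) (\<lambda>i r. (\<lambda>ys. stepN (ys!1)) (i # r # xs)) (xs!0))"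
    by (rule rc_rec) (auto intro!: rc_stepN' rc_nth)
qed (simp add: rec_run)

lemma rcp_Mh: "rcp 2 (\<lambda>xs. Mh (xs!0) (xs!1))"
  unfolding Mh_def initN_def haltN_def
  by (intro rcp_eq rc_runN rc_pr rc_consc rc_nth rc_const) simp_all

lemma run_enc: "runN s (encC c) = encC ((step ^^ s) c)"
  by (induction s) (auto simp: runN_def stepN_enc)

lemma stepN_halt[simp]: "stepN (haltN v) = haltN v"
  by (simp add: stepN_def haltN_def sRt_def)

lemma runN_halt[simp]: "runN s (haltN v) = haltN v"
  by (induction s) (auto simp: runN_def)

lemma runN_add: "runN (a + b) z = runN a (runN b z)"
  by (simp add: runN_def funpow_add)

lemma halt_unique: "runN s1 z = haltN a \<Longrightarrow> runN s2 z = haltN b \<Longrightarrow> a = b"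
proof -
  assume 1: "runN s1 z = haltN a" and 2: "runN s2 z = haltN b"
  have "runN (s2 + s1) z = haltN a" using 1 by (simp add: runN_add)
  moreover have "runN (s1 + s2) z = haltN b" using 2 by (simp add: runN_add)
  ultimately show "a = b" by (simp add: add.commute haltN_def)
qed

lemma Mh_mono: "Mh k s \<Longrightarrow> s \<le> s' \<Longrightarrow> Mh k s'"
  unfolding Mh_def by (metis le_add_diff_inverse2 runN_add runN_halt)

lemma Dset_not_computable: "\<not> (\<exists>d. \<forall>k. reval (\<lambda>_. False) d [k] (if k \<in> Dset then 1 else 0))"
proof
  assume "\<exists>d. \<forall>k. reval (\<lambda>_. False) d [k] (if k \<in> Dset then 1 else 0)"
  then obtain d where d: "\<And>k. reval (\<lambda>_. False) d [k] (if k \<in> Dset then 1 else 0)" by blast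
  define k0 where "k0 = encR d"
  define y where "y = (if k0 \<in> Dset then 1 else (0::nat))"
  have "reach (Ev d [k0], []) (Rt y, [])" using complete[OF d[of k0]] by (simp add: y_def)
  then obtain s where "(step ^^ s) (Ev d [k0], []) = (Rt y, [])" unfolding reach_def by blast
  then have s: "runN s (initN k0) = haltN y"
    using run_enc[of s "(Ev d [k0], [])"] by (simp add: initN_def haltN_def k0_def)
  show False
  proof (cases "k0 \<in> Dset")
    case True
    then obtain s' where "runN s' (initN k0) = haltN 0" by (auto simp: Dset_def Mh_def)
    with s have "y = 0" by (metis halt_unique)
    with True show False by (simp add: y_def)
  next
    case False
    then have "y = 0" by (simp add: y_def)
    with s have "Mh k0 s" by (simp add: Mh_def)
    with False show False by (auto simp: Dset_def)
  qed
qed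


lemma str_code_inj: "str_code s = str_code t \<Longrightarrow> s = t"
proof (induction s arbitrary: t)
  case Nil then show ?case by (cases t) (auto split: if_splits)
next
  case (Cons a s)
  show ?case
  proof (cases t)
    case Nil then show ?thesis using Cons.prems by (auto split: if_splits)
  next
    case (Cons b t')
    have "2 * str_code s + (if a then 2 else 1) = 2 * str_code t' + (if b then 2 else 1)"
      using Cons.prems Cons by simp
    then have "a = b" "str_code s = str_code t'" by (auto split: if_splits) presburger+
    then show ?thesis using Cons.IH Cons by simp
  qed
qed

lemma str_code_surj: "\<exists>s. str_code s = n"
proof (induction n rule: less_induct)
  case (less n)
  show ?case
  proof (cases "n = 0")
    case True then show ?thesis by (intro exI[of _ "[]"]) simp
  next
    case False
    show ?thesis
    proof (cases "even n")
      case True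
      then obtain m where m: "n = 2 * m" by (rule evenE)
      define c where "c = m - 1"
      have c: "n = 2 * c + 2" using m False by (simp add: c_def)
      then obtain s where "str_code s = c" using less[of c] by auto
      then show ?thesis using c by (intro exI[of _ "True # s"]) simp
    next
      case odd: False
      then obtain c where c: "n = 2 * c + 1" by (metis oddE)
      then obtain s where "str_code s = c" using less[of c] by auto
      then show ?thesis using c by (intro exI[of _ "False # s"]) simp
    qed
  qed
qed

definition hp :: "nat \<Rightarrow> nat" where "hp m = (LEAST q. m < 2 * q + 3)"

lemma hp_eq: "hp m = (m - 1) div 2"
  unfolding hp_def by (rule Least_equality) auto

lemma hp_code[simp]: "hp (str_code (b # s)) = str_code s"
  by (simp add: hp_eq)

definition dN :: "nat \<Rightarrow> nat \<Rightarrow> nat" where "dN i n = (hp ^^ i) n"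

lemma dN_code: "dN i (str_code s) = str_code (drop i s)"
proof (induction i arbitrary: s)
  case 0 then show ?case by (simp add: dN_def)
next
  case (Suc i)
  show ?case
  proof (cases s)
    case Nil
    have "(hp ^^ j) 0 = 0" for j by (induction j) (auto simp: hp_eq)
    then show ?thesis using Nil by (simp add: dN_def hp_eq)
  next
    case (Cons b s')
    have "dN (Suc i) (str_code s) = dN i (hp (str_code s))" by (simp only: dN_def funpow_Suc_right comp_def)
    then show ?thesis using Suc Cons hp_code by (metis drop_Suc_Cons)
  qed
qed

definition bitN :: "nat \<Rightarrow> nat \<Rightarrow> bool" where
  "bitN n i \<longleftrightarrow> dN i n \<noteq> 0 \<and> 2 * hp (dN i n) + 2 = dN i n"

lemma bitN_code: "i < length s \<Longrightarrow> bitN (str_code s) i = s ! i"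
  unfolding bitN_def dN_code
  by (simp add: Cons_nth_drop_Suc[symmetric] hp_eq)

definition lenN :: "nat \<Rightarrow> nat" where "lenN n = (LEAST l. dN l n = 0)"

lemma lenN_code: "lenN (str_code s) = length s"
  unfolding lenN_def dN_code
proof (rule Least_equality)
  show "str_code (drop (length s) s) = 0" by simp
next
  fix l assume "str_code (drop l s) = 0"
  then have "drop l s = []" using str_code_inj[of "drop l s" "[]"] by simp
  then show "length s \<le> l" by simp
qed

lemma rc_hp[intro]: "rc n f \<Longrightarrow> rc n (\<lambda>xs. hp (f xs))"
proof (rule rc_lift1[where op=hp])
  show "rc 1 (\<lambda>xs. LEAST q. (\<lambda>q xs. xs!0 < 2 * q + 3) q xs)"
  proof (rule rc_least)
    show "rcp (Suc 1) (\<lambda>ys. tl ys ! 0 < 2 * hd ys + 3)"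
      by (intro rcp_less rc_add rc_mult rc_hd rc_tl_nth rc_const) auto
    fix xs :: "nat list" show "\<exists>q. xs!0 < 2 * q + 3" by (intro exI[of _ "xs!0"]) simp
  qed
qed (simp add: hp_def)

lemma rec_dN: "rec_nat n (\<lambda>i r. hp r) i = dN i n"
  by (induction i) (auto simp: dN_def)

lemma rc_dN[intro]: "rc n f \<Longrightarrow> rc n g \<Longrightarrow> rc n (\<lambda>xs. dN (f xs) (g xs))"
proof (rule rc_lift2[where op=dN])
  show "rc 2 (\<lambda>xs. rec_nat (xs!1) (\<lambda>i r. (\<lambda>ys. hp (ys!1)) (i # r # xs)) (xs!0))"
    by (rule rc_rec) (auto intro!: rc_hp rc_nth)
qed (simp add: rec_dN)

lemma rcp_bitN[intro]: "rc n f \<Longrightarrow> rc n g \<Longrightarrow> rcp n (\<lambda>xs. bitN (f xs) (g xs))"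
  unfolding bitN_def by (intro rcp_conj rcp_not rcp_eq rc_add rc_mult rc_hp rc_dN rc_const)

lemma length_le_code: "length s \<le> str_code s"
  by (induction s) auto

lemma rc_lenN[intro]: "rc n f \<Longrightarrow> rc n (\<lambda>xs. lenN (f xs))"
proof (rule rc_lift1[where op=lenN])
  show "rc 1 (\<lambda>xs. LEAST l. (\<lambda>l xs. dN l (xs!0) = 0) l xs)"
  proof (rule rc_least)
    show "rcp (Suc 1) (\<lambda>ys. dN (hd ys) (tl ys ! 0) = 0)"
      by (intro rcp_eq rc_dN rc_hd rc_tl_nth rc_const) auto
    fix xs :: "nat list"
    obtain s where s: "str_code s = xs!0" using str_code_surj by blast
    have "dN (xs!0) (xs!0) = 0" using s[symmetric] length_le_code[of s] by (simp add: dN_code)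
    then show "\<exists>l. dN l (xs!0) = 0" by blast
  qed
qed (simp add: lenN_def)

definition tree_of :: "(nat \<Rightarrow> nat \<Rightarrow> nat \<Rightarrow> bool) \<Rightarrow> bool list set" where
  "tree_of A = {\<sigma>. card {i. i < length \<sigma> \<and> \<sigma> ! i} \<le> 2 \<and>
     (\<forall>k p. Suc (k + p) < length \<sigma> \<longrightarrow> \<sigma> ! k \<longrightarrow> \<sigma> ! Suc (k + p) \<longrightarrow> A k p (length \<sigma> - (k + p + 2)))}"

definition condN :: "(nat \<Rightarrow> nat \<Rightarrow> nat \<Rightarrow> bool) \<Rightarrow> nat \<Rightarrow> bool" where
  "condN A n \<longleftrightarrow> (\<Sum>i<lenN n. if bitN n i then 1 else 0) \<le> (2::nat) \<and>
     (\<forall>k<lenN n. \<forall>p<lenN n. Suc (k + p) < lenN n \<longrightarrow> bitN n k \<longrightarrow> bitN n (Suc (k + p))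
        \<longrightarrow> A k p (lenN n - (k + p + 2)))"

lemma card_sum: "card {i. i < (L::nat) \<and> P i} = (\<Sum>i<L. if P i then 1 else (0::nat))"
proof (induction L)
  case 0 then show ?case by simp
next
  case (Suc L)
  have "{i. i < Suc L \<and> P i} = {i. i < L \<and> P i} \<union> (if P L then {L} else {})" by (auto simp: less_Suc_eq)
  then show ?case using Suc by (auto simp: card_insert_if)
qed

lemma condN_code: "condN A (str_code s) \<longleftrightarrow> s \<in> tree_of A"
proof -
  have "(\<Sum>i<length s. if bitN (str_code s) i then 1 else (0::nat)) = (\<Sum>i<length s. if s ! i then 1 else 0)"
    by (rule sum.cong) (auto simp: bitN_code)
  moreover have "(\<forall>k<length s. \<forall>p<length s. Suc (k + p) < length s \<longrightarrow> bitN (str_code s) k \<longrightarrow>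
      bitN (str_code s) (Suc (k + p)) \<longrightarrow> A k p (length s - (k + p + 2))) \<longleftrightarrow>
    (\<forall>k p. Suc (k + p) < length s \<longrightarrow> s ! k \<longrightarrow> s ! Suc (k + p) \<longrightarrow> A k p (length s - (k + p + 2)))"
    by (auto simp: bitN_code)
  ultimately show ?thesis unfolding condN_def tree_of_def lenN_code by (simp add: card_sum)
qed

lemma tree_mem_code: "n \<in> str_code ` tree_of A \<longleftrightarrow> condN A n"
proof -
  obtain s where s: "str_code s = n" using str_code_surj by blast
  have "n \<in> str_code ` tree_of A \<longleftrightarrow> s \<in> tree_of A"
    using s str_code_inj by blast
  then show ?thesis using condN_code s by blast
qed

lemma rcp_condN:
  assumes A: "rcp 3 (\<lambda>ys. A (ys!0) (ys!1) (ys!2))"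
  shows "rcp 1 (\<lambda>xs. condN A (xs!0))"
proof -
  have A': "rcp n (\<lambda>xs. A (f xs) (g xs) (h xs))" if "rc n f" "rc n g" "rc n h" for n f g h
    using rc_comp3[OF A[unfolded rcp_def] that] unfolding rcp_def by simp
  show ?thesis
    unfolding condN_def
    apply (intro rcp_conj rcp_le rc_const)
     apply (rule rc_sum)
      apply (rule rc_if) apply (rule rcp_bitN) apply (intro rc_tl_nth rc_hd; simp)
        apply (intro rc_tl_nth rc_hd; simp) apply (rule rc_const) apply (rule rc_const)
     apply (intro rc_lenN rc_nth; simp)
    apply (rule rcp_ball)
     apply (rule rcp_ball)
      apply (intro rcp_imp rcp_less rc_Suc rc_add rcp_bitN A' rc_lenN rc_sub rc_hd rc_hd_tl rc_tl_tl_nth rc_const)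
              apply simp_all
     apply (intro rc_lenN rc_tl_nth; simp)
    apply (intro rc_lenN rc_nth; simp)
    done
qed

lemma computable_tree_of:
  assumes "rcp 3 (\<lambda>ys. A (ys!0) (ys!1) (ys!2))"
  shows "computable_tree (tree_of A)"
proof -
  obtain e where e: "\<forall>xs. length xs = 1 \<longrightarrow> reval (\<lambda>_. False) e xs (if condN A (xs!0) then 1 else 0)"
    using rcp_condN[OF assms] unfolding rcp_def rc_def by blast
  show ?thesis unfolding computable_tree_def computable_set_def
  proof (intro exI allI)
    fix n show "reval (\<lambda>_. False) e [n] (if n \<in> str_code ` tree_of A then 1 else 0)"
      using e[rule_format, of "[n]"] by (simp add: tree_mem_code)
  qed
qed


lemma A_down:
  assumes mono: "\<And>k p t. A k p (Suc t) \<Longrightarrow> A k p t"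
  shows "A k p t \<Longrightarrow> t' \<le> t \<Longrightarrow> A k p t'"
proof (induction t)
  case 0 then show ?case by simp
next
  case (Suc t) then show ?case using mono by (cases "t' = Suc t") auto
qed

lemma is_tree_of:
  assumes mono: "\<And>k p t. A k p (Suc t) \<Longrightarrow> A k p t"
  shows "is_tree (tree_of A)"
  unfolding is_tree_def
proof (intro allI impI)
  fix s u assume su: "s @ u \<in> tree_of A"
  have sub: "{i. i < length s \<and> s ! i} \<subseteq> {i. i < length (s @ u) \<and> (s @ u) ! i}"
    by (auto simp: nth_append)
  have "card {i. i < length s \<and> s ! i} \<le> card {i. i < length (s @ u) \<and> (s @ u) ! i}"
    by (rule card_mono[OF _ sub]) auto
  moreover have "A k p (length s - (k + p + 2))"
    if "Suc (k + p) < length s" "s ! k" "s ! Suc (k + p)" for k p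
  proof -
    have "A k p (length (s @ u) - (k + p + 2))"
      using su that unfolding tree_of_def by (auto simp: nth_append)
    from A_down[of A, OF mono this, of "length s - (k + p + 2)"] show ?thesis by simp
  qed
  ultimately show "s \<in> tree_of A" using su unfolding tree_of_def by auto
qed

lemma mem_paths_tree_of:
  "X \<in> paths (tree_of A) \<longleftrightarrow> (\<forall>n. card {i. i < n \<and> X i} \<le> 2) \<and> (\<forall>k p t. X k \<longrightarrow> X (Suc (k + p)) \<longrightarrow> A k p t)"
proof -
  have eq: "map X [0..<n] \<in> tree_of A \<longleftrightarrow> card {i. i < n \<and> X i} \<le> 2 \<and>
      (\<forall>k p. Suc (k + p) < n \<longrightarrow> X k \<longrightarrow> X (Suc (k + p)) \<longrightarrow> A k p (n - (k + p + 2)))" for n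
  proof -
    have "{i. i < n \<and> map X [0..<n] ! i} = {i. i < n \<and> X i}" by auto
    then show ?thesis unfolding tree_of_def by auto
  qed
  show ?thesis
  proof
    assume "X \<in> paths (tree_of A)"
    then have h: "\<And>n. map X [0..<n] \<in> tree_of A" unfolding paths_def by blast
    have "A k p t" if "X k" "X (Suc (k + p))" for k p t
    proof -
      have "\<forall>ka pa. Suc (ka + pa) < k+p+2+t \<longrightarrow> X ka \<longrightarrow> X (Suc (ka + pa)) \<longrightarrow> A ka pa (k+p+2+t - (ka + pa + 2))"
        using h[of "k+p+2+t", unfolded eq] by blast
      moreover have "Suc (k + p) < k+p+2+t" by simp
      ultimately have "A k p (k+p+2+t - (k + p + 2))" using that by blast
      then show ?thesis by simp
    qed
    then show "(\<forall>n. card {i. i < n \<and> X i} \<le> 2) \<and> (\<forall>k p t. X k \<longrightarrow> X (Suc (k + p)) \<longrightarrow> A k p t)"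
      using h eq by blast
  next
    assume "(\<forall>n. card {i. i < n \<and> X i} \<le> 2) \<and> (\<forall>k p t. X k \<longrightarrow> X (Suc (k + p)) \<longrightarrow> A k p t)"
    then show "X \<in> paths (tree_of A)" unfolding paths_def using eq by auto
  qed
qed

definition Zs :: "nat \<Rightarrow> bool" where "Zs = (\<lambda>_. False)"
definition bs :: "nat \<Rightarrow> nat \<Rightarrow> bool" where "bs k = (\<lambda>n. n = k)"
definition ts :: "nat \<Rightarrow> nat \<Rightarrow> nat \<Rightarrow> bool" where "ts k p = (\<lambda>n. n = k \<or> n = Suc (k + p))"

definition S :: "(nat \<Rightarrow> nat) \<Rightarrow> (nat \<Rightarrow> bool) set" where
  "S \<tau> = insert Zs (range bs \<union> range (\<lambda>k. ts k (\<tau> k)))"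

lemma shape:
  assumes c: "\<forall>n. card {i. i < n \<and> X i} \<le> 2"
  shows "X = Zs \<or> (\<exists>k. X = bs k) \<or> (\<exists>k p. X = ts k p)"
proof -
  let ?O = "{i. X i}"
  have fin_le: "card F \<le> 2" if F: "F \<subseteq> ?O" "finite F" for F
  proof (cases "F = {}")
    case True then show ?thesis by simp
  next
    case False
    have sub: "F \<subseteq> {i. i < Suc (Max F) \<and> X i}"
    proof
      fix x assume x: "x \<in> F"
      then have "x \<le> Max F" using F(2) by simp
      then show "x \<in> {i. i < Suc (Max F) \<and> X i}" using x F(1) by auto
    qed
    have "card F \<le> card {i. i < Suc (Max F) \<and> X i}" by (rule card_mono[OF _ sub]) simp
    then show ?thesis using c[rule_format, of "Suc (Max F)"] by linarith
  qed
  have finO: "finite ?O"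
  proof (rule ccontr)
    assume "infinite ?O"
    then obtain F where F: "F \<subseteq> ?O" "finite F" "card F = 3"
      using infinite_arbitrarily_large[of ?O 3] by blast
    then show False using fin_le[OF F(1) F(2)] by simp
  qed
  have cO: "card ?O \<le> 2" using fin_le[OF order_refl finO] .
  then consider "card ?O = 0" | "card ?O = 1" | "card ?O = 2" by linarith
  then show ?thesis
  proof cases
    case 1 then have "?O = {}" using finO by simp
    then have "X = Zs" unfolding Zs_def by auto
    then show ?thesis by blast
  next
    case 2 then obtain k where k: "?O = {k}" by (rule card_1_singletonE)
    have "X = bs k" unfolding bs_def
    proof
      fix n have "n \<in> ?O \<longleftrightarrow> n \<in> {k}" using k by simp
      then show "X n = (n = k)" by simp
    qed
    then show ?thesis by blast
  next
    case 3 then obtain a b where ab: "?O = {a, b}" "a \<noteq> b" by (meson card_2_iff)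
    have "\<exists>k p. ?O = {k, Suc (k + p)}"
    proof (cases "a < b")
      case True then have "Suc (a + (b - a - 1)) = b" by simp
      then show ?thesis using ab(1) by metis
    next
      case False then have "b < a" using ab by simp
      then have "Suc (b + (a - b - 1)) = a" by simp
      then show ?thesis using ab(1) by (metis insert_commute)
    qed
    then obtain k p where kp: "?O = {k, Suc (k + p)}" by blast
    have "X = ts k p" unfolding ts_def
    proof
      fix n have "n \<in> ?O \<longleftrightarrow> n \<in> {k, Suc (k + p)}" using kp by simp
      then show "X n = (n = k \<or> n = Suc (k + p))" by simp
    qed
    then show ?thesis by blast
  qed
qed

lemma ts_pair: "ts k p a \<Longrightarrow> ts k p (Suc (a + q)) \<Longrightarrow> a = k \<and> q = p"
  unfolding ts_def by (elim disjE) linarith+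

lemma card_le2: "{i. i < n \<and> X i} \<subseteq> {a, b} \<Longrightarrow> card {i. i < (n::nat) \<and> X i} \<le> 2"
proof -
  assume h: "{i. i < n \<and> X i} \<subseteq> {a, b}"
  have "card {i. i < n \<and> X i} \<le> card {a, b}" by (rule card_mono[OF _ h]) simp
  also have "card {a, b} \<le> 2" by (simp add: card_insert_if)
  finally show ?thesis .
qed

lemma paths_tree_of:
  assumes uniq: "\<And>k. \<exists>!p. \<forall>t. A k p t"
  shows "paths (tree_of A) = S (\<lambda>k. THE p. \<forall>t. A k p t)"
proof -
  let ?\<tau> = "\<lambda>k. THE p. \<forall>t. A k p t"
  have tau: "(\<forall>t. A k p t) \<longleftrightarrow> p = ?\<tau> k" for k p
  proof
    assume h: "\<forall>t. A k p t"
    show "p = ?\<tau> k" using the1_equality[OF uniq[of k] h] by simp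
  next
    assume "p = ?\<tau> k"
    then show "\<forall>t. A k p t" using theI'[OF uniq[of k]] by simp
  qed
  show ?thesis
  proof (rule set_eqI)
    fix X
    show "X \<in> paths (tree_of A) \<longleftrightarrow> X \<in> S ?\<tau>"
    proof
      assume X: "X \<in> paths (tree_of A)"
      then have c: "\<forall>n. card {i. i < n \<and> X i} \<le> 2" and a: "\<forall>k p t. X k \<longrightarrow> X (Suc (k + p)) \<longrightarrow> A k p t"
        unfolding mem_paths_tree_of by blast+
      from shape[OF c] show "X \<in> S ?\<tau>"
      proof (elim disjE exE)
        fix k p assume "X = ts k p"
        then have "\<forall>t. A k p t" using a unfolding ts_def by auto
        then have "p = ?\<tau> k" using tau by blast
        then show ?thesis using \<open>X = ts k p\<close> unfolding S_def by auto
      qed (auto simp: S_def)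
    next
      assume "X \<in> S ?\<tau>"
      then consider "X = Zs" | k where "X = bs k" | k where "X = ts k (?\<tau> k)" unfolding S_def by auto
      then show "X \<in> paths (tree_of A)"
      proof cases
        case 1
        have c: "\<forall>n. card {i. i < n \<and> X i} \<le> 2" using 1 by (simp add: Zs_def)
        have a: "\<forall>k' p t. X k' \<longrightarrow> X (Suc (k' + p)) \<longrightarrow> A k' p t" using 1 by (simp add: Zs_def)
        show ?thesis unfolding mem_paths_tree_of using c a by blast
      next
        case (2 k)
        have sub: "{i. i < n \<and> X i} \<subseteq> {k, k}" for n using 2 by (auto simp: bs_def)
        have c: "\<forall>n. card {i. i < n \<and> X i} \<le> 2" using card_le2[OF sub] by blast
        have a: "\<forall>k' p t. X k' \<longrightarrow> X (Suc (k' + p)) \<longrightarrow> A k' p t" using 2 by (simp add: bs_def)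
        show ?thesis unfolding mem_paths_tree_of using c a by blast
      next
        case (3 k)
        have sub: "{i. i < n \<and> X i} \<subseteq> {k, Suc (k + ?\<tau> k)}" for n using 3 by (auto simp: ts_def)
        have c: "\<forall>n. card {i. i < n \<and> X i} \<le> 2" using card_le2[OF sub] by blast
        have a: "\<forall>a q t. X a \<longrightarrow> X (Suc (a + q)) \<longrightarrow> A a q t"
        proof (intro allI impI)
          fix a q t assume "X a" "X (Suc (a + q))"
          then have "a = k \<and> q = ?\<tau> k" using ts_pair[of k "?\<tau> k" a q] 3 by simp
          then show "A a q t" using tau[of k q] by simp
        qed
        show ?thesis unfolding mem_paths_tree_of using c a by blast
      qed
    qed
  qed
qed


lemma lex_wit:
  assumes "\<forall>m<n. X m = Y m" "X n \<noteq> Y n"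
  shows "lex_less X Y \<longleftrightarrow> \<not> X n \<and> Y n"
proof -
  have "(LEAST m. X m \<noteq> Y m) = n"
    by (rule Least_equality) (use assms in \<open>auto simp: not_less[symmetric]\<close>)
  moreover have "X \<noteq> Y" using assms by auto
  ultimately show ?thesis unfolding lex_less_def by (simp add: Let_def)
qed

lemma lex_irrefl: "\<not> lex_less X X" unfolding lex_less_def by simp

lemma ts_ts: "lex_less (ts k p) (ts j q) \<longleftrightarrow> j < k \<or> (j = k \<and> q < p)"
proof (cases "j < k")
  case True
  have "lex_less (ts k p) (ts j q) \<longleftrightarrow> \<not> ts k p j \<and> ts j q j"
    by (rule lex_wit) (use True in \<open>auto simp: ts_def\<close>)
  then show ?thesis using True by (simp add: ts_def)
next
  case F: False
  show ?thesis
  proof (cases "k < j")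
    case True
    have "lex_less (ts k p) (ts j q) \<longleftrightarrow> \<not> ts k p k \<and> ts j q k"
      by (rule lex_wit) (use True in \<open>auto simp: ts_def\<close>)
    then show ?thesis using True by (simp add: ts_def)
  next
    case False
    then have jk: "j = k" using F by simp
    consider "q < p" | "q = p" | "p < q" by linarith
    then show ?thesis
    proof cases
      case 1
      have "lex_less (ts k p) (ts j q) \<longleftrightarrow> \<not> ts k p (Suc (k + q)) \<and> ts j q (Suc (k + q))"
        by (rule lex_wit) (use 1 jk in \<open>auto simp: ts_def\<close>)
      then show ?thesis using 1 jk by (simp add: ts_def)
    next
      case 2 then show ?thesis using jk lex_irrefl by simp
    next
      case 3
      have "lex_less (ts k p) (ts j q) \<longleftrightarrow> \<not> ts k p (Suc (k + p)) \<and> ts j q (Suc (k + p))"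
        by (rule lex_wit) (use 3 jk in \<open>auto simp: ts_def\<close>)
      then show ?thesis using 3 jk by (simp add: ts_def)
    qed
  qed
qed

lemma bs_bs: "lex_less (bs k) (bs j) \<longleftrightarrow> j < k"
proof -
  consider "j < k" | "j = k" | "k < j" by linarith
  then show ?thesis
  proof cases
    case 1
    have "lex_less (bs k) (bs j) \<longleftrightarrow> \<not> bs k j \<and> bs j j"
      by (rule lex_wit) (use 1 in \<open>auto simp: bs_def\<close>)
    then show ?thesis using 1 by (simp add: bs_def)
  next
    case 2 then show ?thesis using lex_irrefl by simp
  next
    case 3
    have "lex_less (bs k) (bs j) \<longleftrightarrow> \<not> bs k k \<and> bs j k"
      by (rule lex_wit) (use 3 in \<open>auto simp: bs_def\<close>)
    then show ?thesis using 3 by (simp add: bs_def)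
  qed
qed

lemma ts_bs: "lex_less (ts k p) (bs j) \<longleftrightarrow> j < k"
proof -
  consider "j < k" | "j = k" | "k < j" by linarith
  then show ?thesis
  proof cases
    case 1
    have "lex_less (ts k p) (bs j) \<longleftrightarrow> \<not> ts k p j \<and> bs j j"
      by (rule lex_wit) (use 1 in \<open>auto simp: bs_def ts_def\<close>)
    then show ?thesis using 1 by (simp add: bs_def ts_def)
  next
    case 2
    have "lex_less (ts k p) (bs j) \<longleftrightarrow> \<not> ts k p (Suc (k + p)) \<and> bs j (Suc (k + p))"
      by (rule lex_wit) (use 2 in \<open>auto simp: bs_def ts_def\<close>)
    then show ?thesis using 2 by (simp add: bs_def ts_def)
  next
    case 3
    have "lex_less (ts k p) (bs j) \<longleftrightarrow> \<not> ts k p k \<and> bs j k"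
      by (rule lex_wit) (use 3 in \<open>auto simp: bs_def ts_def\<close>)
    then show ?thesis using 3 by (simp add: bs_def ts_def)
  qed
qed

lemma bs_ts: "lex_less (bs k) (ts j q) \<longleftrightarrow> j \<le> k"
proof -
  consider "j < k" | "j = k" | "k < j" by linarith
  then show ?thesis
  proof cases
    case 1
    have "lex_less (bs k) (ts j q) \<longleftrightarrow> \<not> bs k j \<and> ts j q j"
      by (rule lex_wit) (use 1 in \<open>auto simp: bs_def ts_def\<close>)
    then show ?thesis using 1 by (simp add: bs_def ts_def)
  next
    case 2
    have "lex_less (bs k) (ts j q) \<longleftrightarrow> \<not> bs k (Suc (k + q)) \<and> ts j q (Suc (k + q))"
      by (rule lex_wit) (use 2 in \<open>auto simp: bs_def ts_def\<close>)
    then show ?thesis using 2 by (simp add: bs_def ts_def)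
  next
    case 3
    have "lex_less (bs k) (ts j q) \<longleftrightarrow> \<not> bs k k \<and> ts j q k"
      by (rule lex_wit) (use 3 in \<open>auto simp: bs_def ts_def\<close>)
    then show ?thesis using 3 by (simp add: bs_def ts_def)
  qed
qed

lemma X_Zs: "\<not> lex_less X Zs"
  unfolding lex_less_def Zs_def by (simp add: Let_def)

lemma Zs_bs: "lex_less Zs (bs j)"
  by (subst lex_wit[of j]) (auto simp: Zs_def bs_def)

lemma Zs_ts: "lex_less Zs (ts j q)"
  by (subst lex_wit[of j]) (auto simp: Zs_def ts_def)

lemmas lex_simps = ts_ts bs_bs ts_bs bs_ts X_Zs Zs_bs Zs_ts lex_irrefl

lemma distinct_seqs[simp]:
  "Zs \<noteq> bs k" "bs k \<noteq> Zs" "Zs \<noteq> ts k p" "ts k p \<noteq> Zs" "bs j \<noteq> ts k p" "ts k p \<noteq> bs j"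
  "bs j = bs k \<longleftrightarrow> j = k" "ts k p = ts k' p' \<longleftrightarrow> k = k' \<and> p = p'"
proof -
  show "Zs \<noteq> bs k" "bs k \<noteq> Zs" by (auto simp: Zs_def bs_def fun_eq_iff)
  show "Zs \<noteq> ts k p" "ts k p \<noteq> Zs" by (auto simp: Zs_def ts_def fun_eq_iff)
  show "bs j \<noteq> ts k p"
  proof
    assume "bs j = ts k p"
    then have "bs j k" "bs j (Suc (k + p))" by (auto simp: ts_def)
    then show False by (simp add: bs_def)
  qed
  then show "ts k p \<noteq> bs j" by (rule not_sym)
  show "bs j = bs k \<longleftrightarrow> j = k" by (auto simp: bs_def fun_eq_iff)
  show "ts k p = ts k' p' \<longleftrightarrow> k = k' \<and> p = p'"
  proof
    assume h: "ts k p = ts k' p'"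
    have a: "k = k' \<or> k = Suc (k' + p')" using fun_cong[OF h, of k] by (simp add: ts_def)
    have b: "k' = k \<or> k' = Suc (k + p)" using fun_cong[OF h, of k'] by (simp add: ts_def)
    have kk: "k = k'" using a b by linarith
    have c: "Suc (k + p) = k' \<or> Suc (k + p) = Suc (k' + p')" using fun_cong[OF h, of "Suc (k + p)"] by (simp add: ts_def)
    show "k = k' \<and> p = p'" using kk c by linarith
  qed simp
qed


definition hmap :: "(nat \<Rightarrow> nat) \<Rightarrow> (nat \<Rightarrow> nat) \<Rightarrow> (nat \<Rightarrow> bool) \<Rightarrow> (nat \<Rightarrow> bool)" where
  "hmap \<tau>1 \<tau>2 X = (if \<exists>k. X = ts k (\<tau>1 k) then ts (LEAST n. X n) (\<tau>2 (LEAST n. X n)) else X)"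

lemma least_ts: "(LEAST n. ts k p n) = k"
  by (rule Least_equality) (auto simp: ts_def)

lemma hmap_ts[simp]: "hmap \<tau>1 \<tau>2 (ts k (\<tau>1 k)) = ts k (\<tau>2 k)"
  unfolding hmap_def least_ts by auto

lemma hmap_bs[simp]: "hmap \<tau>1 \<tau>2 (bs k) = bs k"
  unfolding hmap_def by simp

lemma hmap_Zs[simp]: "hmap \<tau>1 \<tau>2 Zs = Zs"
  unfolding hmap_def by simp

lemma S_cases:
  assumes "X \<in> S \<tau>"
  obtains "X = Zs" | k where "X = bs k" | k where "X = ts k (\<tau> k)"
  using assms unfolding S_def by blast

lemma Zs_S[simp]: "Zs \<in> S \<tau>" and bs_S[simp]: "bs k \<in> S \<tau>" and ts_S[simp]: "ts k (\<tau> k) \<in> S \<tau>"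
  unfolding S_def by auto

lemma hmap_iso: "order_iso_on (S \<tau>1) (S \<tau>2) (hmap \<tau>1 \<tau>2)"
  unfolding order_iso_on_def
proof (intro conjI ballI)
  show "bij_betw (hmap \<tau>1 \<tau>2) (S \<tau>1) (S \<tau>2)"
  proof (rule bij_betw_imageI)
    show "inj_on (hmap \<tau>1 \<tau>2) (S \<tau>1)"
    proof (rule inj_onI)
      fix X Y assume "X \<in> S \<tau>1" "Y \<in> S \<tau>1" "hmap \<tau>1 \<tau>2 X = hmap \<tau>1 \<tau>2 Y"
      then show "X = Y" by (elim S_cases) simp_all
    qed
    show "hmap \<tau>1 \<tau>2 ` S \<tau>1 = S \<tau>2"
    proof
      show "hmap \<tau>1 \<tau>2 ` S \<tau>1 \<subseteq> S \<tau>2"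
        by (auto elim: S_cases)
      show "S \<tau>2 \<subseteq> hmap \<tau>1 \<tau>2 ` S \<tau>1"
      proof
        fix Y assume "Y \<in> S \<tau>2"
        then show "Y \<in> hmap \<tau>1 \<tau>2 ` S \<tau>1"
        proof (cases rule: S_cases)
          case 1 then show ?thesis using hmap_Zs[of \<tau>1 \<tau>2] Zs_S[of \<tau>1] by (metis image_eqI)
        next
          case (2 k) then show ?thesis using hmap_bs[of \<tau>1 \<tau>2 k] bs_S[of k \<tau>1] by (metis image_eqI)
        next
          case (3 k) then show ?thesis using hmap_ts[of \<tau>1 \<tau>2 k] ts_S[of k \<tau>1] by (metis image_eqI)
        qed
      qed
    qed
  qed
next
  fix X Y assume "X \<in> S \<tau>1" "Y \<in> S \<tau>1"
  then show "lex_less X Y \<longleftrightarrow> lex_less (hmap \<tau>1 \<tau>2 X) (hmap \<tau>1 \<tau>2 Y)"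
    by (elim S_cases) (auto simp: lex_simps)
qed

definition above :: "(nat \<Rightarrow> nat) \<Rightarrow> (nat \<Rightarrow> bool) \<Rightarrow> (nat \<Rightarrow> bool) set" where
  "above \<tau> X = {Y \<in> S \<tau>. lex_less X Y}"

lemma above_ts: "above \<tau> (ts k (\<tau> k)) = bs ` {..<k} \<union> (\<lambda>j. ts j (\<tau> j)) ` {..<k}"
proof (rule set_eqI)
  fix Y show "Y \<in> above \<tau> (ts k (\<tau> k)) \<longleftrightarrow> Y \<in> bs ` {..<k} \<union> (\<lambda>j. ts j (\<tau> j)) ` {..<k}"
  proof
    assume "Y \<in> above \<tau> (ts k (\<tau> k))"
    then have "Y \<in> S \<tau>" "lex_less (ts k (\<tau> k)) Y" unfolding above_def by auto
    then show "Y \<in> bs ` {..<k} \<union> (\<lambda>j. ts j (\<tau> j)) ` {..<k}"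
      by (elim S_cases) (auto simp: lex_simps)
  next
    assume "Y \<in> bs ` {..<k} \<union> (\<lambda>j. ts j (\<tau> j)) ` {..<k}"
    then show "Y \<in> above \<tau> (ts k (\<tau> k))" unfolding above_def by (auto simp: lex_simps)
  qed
qed

lemma above_bs: "above \<tau> (bs k) = bs ` {..<k} \<union> (\<lambda>j. ts j (\<tau> j)) ` {..<Suc k}"
proof (rule set_eqI)
  fix Y show "Y \<in> above \<tau> (bs k) \<longleftrightarrow> Y \<in> bs ` {..<k} \<union> (\<lambda>j. ts j (\<tau> j)) ` {..<Suc k}"
  proof
    assume "Y \<in> above \<tau> (bs k)"
    then have "Y \<in> S \<tau>" "lex_less (bs k) Y" unfolding above_def by auto
    then show "Y \<in> bs ` {..<k} \<union> (\<lambda>j. ts j (\<tau> j)) ` {..<Suc k}"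
      by (elim S_cases) (auto simp: lex_simps less_Suc_eq_le)
  next
    assume "Y \<in> bs ` {..<k} \<union> (\<lambda>j. ts j (\<tau> j)) ` {..<Suc k}"
    then show "Y \<in> above \<tau> (bs k)" unfolding above_def by (auto simp: lex_simps less_Suc_eq_le)
  qed
qed

lemma above_Zs_inf: "infinite (above \<tau> Zs)"
proof
  assume "finite (above \<tau> Zs)"
  moreover have "range bs \<subseteq> above \<tau> Zs" unfolding above_def by (auto simp: lex_simps)
  ultimately have "finite (range bs)" by (rule finite_subset[rotated])
  moreover have "inj bs" by (rule injI) simp
  ultimately show False using finite_imageD by blast
qed

lemma card_blocks: "card (bs ` {..<a} \<union> (\<lambda>j. ts j (\<tau> j)) ` {..<b}) = a + b"
proof -
  have "card (bs ` {..<a} \<union> (\<lambda>j. ts j (\<tau> j)) ` {..<b}) = card (bs ` {..<a}) + card ((\<lambda>j. ts j (\<tau> j)) ` {..<b})"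
    by (rule card_Un_disjoint) auto
  moreover have "card (bs ` {..<a}) = a" by (subst card_image) (auto intro: inj_onI)
  moreover have "card ((\<lambda>j. ts j (\<tau> j)) ` {..<b}) = b" by (subst card_image) (auto intro: inj_onI)
  ultimately show ?thesis by simp
qed

lemma iso_ts:
  assumes g: "order_iso_on (S \<tau>1) (S \<tau>2) g"
  shows "g (ts k (\<tau>1 k)) = ts k (\<tau>2 k)"
proof -
  have bij: "bij_betw g (S \<tau>1) (S \<tau>2)" and ord: "\<forall>X\<in>S \<tau>1. \<forall>Y\<in>S \<tau>1. lex_less X Y \<longleftrightarrow> lex_less (g X) (g Y)"
    using g unfolding order_iso_on_def by auto
  let ?X = "ts k (\<tau>1 k)"
  have XS: "?X \<in> S \<tau>1" by simp
  have img: "g ` above \<tau>1 ?X = above \<tau>2 (g ?X)"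
  proof
    show "g ` above \<tau>1 ?X \<subseteq> above \<tau>2 (g ?X)"
      using bij ord XS unfolding above_def bij_betw_def by auto
    show "above \<tau>2 (g ?X) \<subseteq> g ` above \<tau>1 ?X"
    proof
      fix Y' assume "Y' \<in> above \<tau>2 (g ?X)"
      then have Y': "Y' \<in> S \<tau>2" "lex_less (g ?X) Y'" unfolding above_def by auto
      then obtain Y where Y: "Y \<in> S \<tau>1" "Y' = g Y" using bij unfolding bij_betw_def by auto
      then have "lex_less ?X Y" using ord XS Y'(2) by auto
      then show "Y' \<in> g ` above \<tau>1 ?X" using Y unfolding above_def by auto
    qed
  qed
  have inj: "inj_on g (above \<tau>1 ?X)"
    using bij unfolding bij_betw_def above_def by (auto intro: inj_on_subset)
  have c1: "card (above \<tau>1 ?X) = k + k" unfolding above_ts by (rule card_blocks)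
  have fin1: "finite (above \<tau>1 ?X)" unfolding above_ts by simp
  have c2: "card (above \<tau>2 (g ?X)) = k + k" using card_image[OF inj] c1 img by simp
  have fin2: "finite (above \<tau>2 (g ?X))" using fin1 img by (metis finite_imageI)
  have gXS: "g ?X \<in> S \<tau>2" using bij XS unfolding bij_betw_def by auto
  then show ?thesis
  proof (cases rule: S_cases)
    case 1 then show ?thesis using fin2 above_Zs_inf by simp
  next
    case (2 j)
    then have "card (above \<tau>2 (g ?X)) = j + Suc j" using card_blocks[of j \<tau>2 "Suc j"] above_bs by simp
    then show ?thesis using c2 by presburger
  next
    case (3 j)
    then have "card (above \<tau>2 (g ?X)) = j + j" using card_blocks[of j \<tau>2 j] above_ts by simp
    then have "j = k" using c2 by simp
    then show ?thesis using 3 by simp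
  qed
qed


fun tr :: "recf \<Rightarrow> nat \<Rightarrow> recf \<Rightarrow> recf" where
  "tr Oe a Zero = Zero"
| "tr Oe a Succ = Succ"
| "tr Oe a (Proj i) = Proj i"
| "tr Oe a (Comp f gs) = Comp (tr Oe (length gs) f) (map (tr Oe a) gs @ [Proj a])"
| "tr Oe a (Prec f g) = Prec (tr Oe (a - 1) f) (tr Oe (Suc a) g)"
| "tr Oe a (Mn f) = Mn (tr Oe (Suc a) f)"
| "tr Oe a Orc = Comp Oe [Proj 0, Proj a]"

lemma tr_sound:
  "reval B e xs y \<Longrightarrow> (\<forall>x. reval (\<lambda>_. False) Oe [x, k] (if B x then 1 else 0)) \<Longrightarrow>
   reval (\<lambda>_. False) (tr Oe (length xs) e) (xs @ [k]) y"
proof (induction rule: reval.induct)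
  case (zero A xs) then show ?case by (simp add: reval.zero)
next
  case (succ A x xs) then show ?case by (simp add: reval.succ)
next
  case (proj i xs A)
  have "reval (\<lambda>_. False) (Proj i) (xs @ [k]) ((xs @ [k]) ! i)" using proj by (intro reval.proj) simp
  then show ?case using proj by (simp add: nth_append)
next
  case (comp A xs gs ys f z)
  have l: "list_all2 (\<lambda>g y. reval (\<lambda>_. False) g (xs @ [k]) y) (map (tr Oe (length xs)) gs) ys"
    using comp.IH comp.prems by (auto simp: list_all2_map1 elim: list_all2_mono)
  have p: "list_all2 (\<lambda>g y. reval (\<lambda>_. False) g (xs @ [k]) y) [Proj (length xs)] [k]"
    using reval.proj[of "length xs" "xs @ [k]" "\<lambda>_. False"] by simp
  have "list_all2 (\<lambda>g y. reval (\<lambda>_. False) g (xs @ [k]) y) (map (tr Oe (length xs)) gs @ [Proj (length xs)]) (ys @ [k])"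
    by (rule list_all2_appendI[OF l p])
  moreover have "length ys = length gs" using comp.IH by (simp add: list_all2_lengthD)
  moreover have "reval (\<lambda>_. False) (tr Oe (length ys) f) (ys @ [k]) z" using comp by blast
  ultimately show ?case by (auto intro: reval.comp)
next
  case (prec0 A f xs y g) then show ?case by (auto intro: reval.prec0)
next
  case (precS A f g n xs r y) then show ?case by (auto intro: reval.precS)
next
  case (mn A f n xs)
  have h0: "reval (\<lambda>_. False) (tr Oe (Suc (length xs)) f) (n # (xs @ [k])) 0" using mn by simp
  have h1: "\<forall>m<n. \<exists>v. v \<noteq> 0 \<and> reval (\<lambda>_. False) (tr Oe (Suc (length xs)) f) (m # (xs @ [k])) v"
    using mn.IH(2) mn.prems by fastforce
  show ?case using reval.mn[OF h0 h1] by simp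
next
  case (orc A x xs)
  have "list_all2 (\<lambda>g y. reval (\<lambda>_. False) g ((x # xs) @ [k]) y) [Proj 0, Proj (length (x # xs))] [x, k]"
    using reval.proj[of 0 "(x # xs) @ [k]" "\<lambda>_. False"] reval.proj[of "length (x#xs)" "(x # xs) @ [k]" "\<lambda>_. False"]
    by (simp add: nth_append)
  moreover have "reval (\<lambda>_. False) Oe [x, k] (if A x then 1 else 0)" using orc by blast
  ultimately show ?case by (simp only: tr.simps) (rule reval.comp)
qed

definition AP :: "nat \<Rightarrow> nat \<Rightarrow> nat \<Rightarrow> bool" where "AP k p t \<longleftrightarrow> p = 0"
definition AQ :: "nat \<Rightarrow> nat \<Rightarrow> nat \<Rightarrow> bool" where
  "AQ k p t \<longleftrightarrow> (p = 0 \<and> \<not> Mh k t) \<or> (0 < p \<and> Mh k (p - 1) \<and> (p - 1 = 0 \<or> \<not> Mh k (p - 2)))"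

lemma AQ_mono: "AQ k p (Suc t) \<Longrightarrow> AQ k p t"
  unfolding AQ_def using Mh_mono[of k t "Suc t"] by auto

lemma AQ0: "(\<forall>t. AQ k 0 t) \<longleftrightarrow> k \<notin> Dset"
  unfolding AQ_def Dset_def by auto

lemma AQ_uniq: "\<exists>!p. \<forall>t. AQ k p t"
proof (cases "k \<in> Dset")
  case False
  show ?thesis
  proof (rule ex1I[of _ 0])
    show "\<forall>t. AQ k 0 t" using False AQ0 by blast
    fix p assume "\<forall>t. AQ k p t"
    then show "p = 0" using False unfolding AQ_def Dset_def by auto
  qed
next
  case True
  then have ex: "\<exists>s. Mh k s" by (simp add: Dset_def)
  define s0 where "s0 = (LEAST s. Mh k s)"
  have s0: "Mh k s0" unfolding s0_def using ex by (rule LeastI_ex)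
  have s0min: "\<And>s. s < s0 \<Longrightarrow> \<not> Mh k s" unfolding s0_def by (rule not_less_Least)
  show ?thesis
  proof (rule ex1I[of _ "Suc s0"])
    show "\<forall>t. AQ k (Suc s0) t" unfolding AQ_def using s0 s0min[of "s0 - 1"] by auto
    fix p assume p: "\<forall>t. AQ k p t"
    have "p \<noteq> 0" using p s0 unfolding AQ_def by blast
    then have h: "Mh k (p - 1)" "p - 1 = 0 \<or> \<not> Mh k (p - 2)" using p unfolding AQ_def by auto
    have "s0 \<le> p - 1" using h(1) s0min not_le by blast
    moreover have "\<not> s0 < p - 1"
    proof
      assume "s0 < p - 1"
      then have "s0 \<le> p - 2" by simp
      then have "Mh k (p - 2)" using Mh_mono s0 by blast
      then show False using h(2) \<open>s0 < p - 1\<close> by simp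
    qed
    ultimately show "p = Suc s0" using \<open>p \<noteq> 0\<close> by simp
  qed
qed

lemma rcp_Mh'[intro]: "rc n f \<Longrightarrow> rc n g \<Longrightarrow> rcp n (\<lambda>xs. Mh (f xs) (g xs))"
  using rc_comp2[OF rcp_Mh[unfolded rcp_def]] unfolding rcp_def by simp

lemma rcp_AQ: "rcp 3 (\<lambda>ys. AQ (ys!0) (ys!1) (ys!2))"
  unfolding AQ_def
  by (intro rcp_disj rcp_conj rcp_not rcp_eq rcp_less rcp_Mh' rc_sub rc_nth rc_const) simp_all

lemma rcp_AP: "rcp 3 (\<lambda>ys. AP (ys!0) (ys!1) (ys!2))"
  unfolding AP_def by (intro rcp_eq rc_nth rc_const) simp_all

lemma AP_uniq: "\<exists>!p. \<forall>t. AP k p t" unfolding AP_def by auto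

theorem lemma3p4:
  shows "\<exists>P Q. is_tree P \<and> is_tree Q \<and> computable_tree P \<and> computable_tree Q \<and>
     (\<exists>h. order_iso_on (paths P) (paths Q) h) \<and>
     \<not> (\<exists>h. order_iso_on (paths P) (paths Q) h \<and> computable_map_on (paths P) h)"
proof (intro exI conjI)
  let ?P = "tree_of AP" and ?Q = "tree_of AQ"
  define \<tau>P where "\<tau>P = (\<lambda>k. THE p. \<forall>t. AP k p t)"
  define \<tau>Q where "\<tau>Q = (\<lambda>k. THE p. \<forall>t. AQ k p t)"
  have pP: "paths ?P = S \<tau>P" unfolding \<tau>P_def by (rule paths_tree_of[OF AP_uniq])
  have pQ: "paths ?Q = S \<tau>Q" unfolding \<tau>Q_def by (rule paths_tree_of[OF AQ_uniq])
  have tP: "\<tau>P k = 0" for k unfolding \<tau>P_def AP_def by simp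
  have tQ: "\<tau>Q k = 0 \<longleftrightarrow> k \<notin> Dset" for k
  proof -
    have "(\<forall>t. AQ k 0 t) \<longleftrightarrow> 0 = \<tau>Q k"
    proof
      assume h: "\<forall>t. AQ k 0 t"
      show "0 = \<tau>Q k" unfolding \<tau>Q_def using the1_equality[OF AQ_uniq h] by simp
    next
      assume "0 = \<tau>Q k"
      then show "\<forall>t. AQ k 0 t" using theI'[OF AQ_uniq[of k]] unfolding \<tau>Q_def by simp
    qed
    then show ?thesis using AQ0 by auto
  qed
  show "is_tree ?P" by (rule is_tree_of) (simp add: AP_def)
  show "is_tree ?Q" by (rule is_tree_of[OF AQ_mono])
  show "computable_tree ?P" by (rule computable_tree_of[OF rcp_AP])
  show "computable_tree ?Q" by (rule computable_tree_of[OF rcp_AQ])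
  show "order_iso_on (paths ?P) (paths ?Q) (hmap \<tau>P \<tau>Q)" unfolding pP pQ by (rule hmap_iso)
  show "\<not> (\<exists>h. order_iso_on (paths ?P) (paths ?Q) h \<and> computable_map_on (paths ?P) h)"
  proof
    assume "\<exists>h. order_iso_on (paths ?P) (paths ?Q) h \<and> computable_map_on (paths ?P) h"
    then obtain g e where g: "order_iso_on (S \<tau>P) (S \<tau>Q) g"
      and e: "\<And>X n. X \<in> S \<tau>P \<Longrightarrow> reval X e [n] (if g X n then 1 else 0)"
      unfolding pP pQ computable_map_on_def by blast
    have "rcp 2 (\<lambda>xs. xs!0 = xs!1 \<or> xs!0 = Suc (xs!1))"
      by (intro rcp_disj rcp_eq rc_Suc rc_nth) simp_all
    then obtain eO where eO: "\<And>xs. length xs = 2 \<Longrightarrow>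
        reval (\<lambda>_. False) eO xs (if xs!0 = xs!1 \<or> xs!0 = Suc (xs!1) then 1 else 0)"
      unfolding rcp_def rc_def by blast
    define d where "d = Comp (tr eO 1 e) [Comp Succ [Proj 0], Proj 0]"
    have d: "reval (\<lambda>_. False) d [k] (if k \<notin> Dset then 1 else 0)" for k
    proof -
      have orac: "\<forall>x. reval (\<lambda>_. False) eO [x, k] (if ts k (\<tau>P k) x then 1 else 0)"
        using eO[of "[_, k]"] by (simp add: ts_def tP)
      have "reval (ts k (\<tau>P k)) e [Suc k] (if g (ts k (\<tau>P k)) (Suc k) then 1 else 0)"
        by (rule e) simp
      moreover have "g (ts k (\<tau>P k)) = ts k (\<tau>Q k)" by (rule iso_ts[OF g])
      ultimately have "reval (ts k (\<tau>P k)) e [Suc k] (if k \<notin> Dset then 1 else 0)"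
        using tQ[of k] by (simp add: ts_def)
      from tr_sound[OF this orac] have r: "reval (\<lambda>_. False) (tr eO 1 e) [Suc k, k] (if k \<notin> Dset then 1 else 0)"
        by simp
      have a1: "reval (\<lambda>_. False) (Comp Succ [Proj 0]) [k] (Suc k)"
        using reval.comp[of "\<lambda>_. False" "[k]" "[Proj 0]" "[k]" Succ "Suc k"] reval.proj[of 0 "[k]"] reval.succ
        by simp
      have "list_all2 (\<lambda>g y. reval (\<lambda>_. False) g [k] y) [Comp Succ [Proj 0], Proj 0] [Suc k, k]"
        using a1 reval.proj[of 0 "[k]" "\<lambda>_. False"] by simp
      then show ?thesis unfolding d_def using r by (rule reval.comp)
    qed
    have "rc 1 (\<lambda>xs. if xs!0 \<notin> Dset then 1 else 0)"
      unfolding rc_def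
    proof (intro exI allI impI)
      fix xs :: "nat list" assume "length xs = 1"
      then obtain k where "xs = [k]" by (cases xs) auto
      then show "reval (\<lambda>_. False) d xs (if xs!0 \<notin> Dset then 1 else 0)" using d by simp
    qed
    then have "rc 1 (\<lambda>xs. 1 - (if xs!0 \<notin> Dset then 1 else 0))" by (intro rc_sub rc_const)
    then have "rc 1 (\<lambda>xs. if xs!0 \<in> Dset then 1 else 0)" by (rule rc_cong) simp
    then obtain d2 where d2: "\<And>xs. length xs = 1 \<Longrightarrow> reval (\<lambda>_. False) d2 xs (if xs!0 \<in> Dset then 1 else 0)"
      unfolding rc_def by blast
    have "\<forall>k. reval (\<lambda>_. False) d2 [k] (if k \<in> Dset then 1 else 0)"
    proof
      fix k show "reval (\<lambda>_. False) d2 [k] (if k \<in> Dset then 1 else 0)" using d2[of "[k]"] by simp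
    qed
    then show False using Dset_not_computable by blast
  qed
qed


end
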